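(* Let $\bm v_1,\dots,\bm v_N \in \mathbb{R}^r$ form an equiangular tight frame and let $\bm X := \mathsf{Gram}(\bm v_1,\dots,\bm v_N)$. Then $\bm X \in \mathscr{E}_4^N$ if and only if $N < \frac{r(r+1)}{2}$ or $r = 1$. If $r=1$, then $\bm X = \bm x\bm x^\top$ for some $\bm x \in\{\pm1\}^N$, and $\bm Y = (\bm x\otimes\bm x)(\bm x\otimes\bm x)^\top$ is a degree 4 pseudomoment matrix extending $\bm X$. If $r>1$ and $N < \frac{r(r+1)}{2}$, then a degree 4 pseudomoment matrix extending $\bm X$ is $$\bm Y = \mathrm{vec}(\bm X)\mathrm{vec}(\bm X)^\top + \frac{N^2(1-\frac1r)}{\frac{r(r+1)}{2} - N}\, \bm P,$$ where $\bm P$ is the orthogonal projection matrix of $\mathbb{R}^{N^2}$ onto $\mathrm{vec}(\mathsf{pert}_{\mathscr{E}_2^N}(\bm X))$; equivalently, entrywise, $$Y_{(ij)(k\ell)} = \frac{\frac{r(r-1)}{2}}{\frac{r(r+1)}{2}-N}\big(X_{ij}X_{k\ell} + X_{ik}X_{j\ell} + X_{i\ell}X_{jk}\big) - \frac{r^2(1-\frac1N)}{\frac{r(r+1)}{2}-N}\sum_{m=1}^N X_{im}X_{jm}X_{km}X_{\ell m}.$$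
   Context: Unit vectors $\bm v_1,\dots,\bm v_N\in\mathbb{R}^r$ form a unit norm tight frame (UNTF) if $\sum_i \bm v_i\bm v_i^\top = \frac{N}{r}\bm I_r$; they form an equiangular tight frame (ETF) if they form a UNTF and there is $\alpha\in[0,1]$ with $|\langle \bm v_i,\bm v_j\rangle| = \alpha$ for all $i\ne j$. $\mathsf{Gram}$ denotes the Gram matrix. $\mathscr{E}_2^N := \{\bm X \in \mathbb{R}^{N\times N}_{\mathrm{sym}} : \bm X\succeq 0,\ X_{ii}=1\ \forall i\}$. For $\bm X\in\mathscr{E}_2^N$, $\mathsf{pert}_{\mathscr{E}_2^N}(\bm X) := \{\bm A\in\mathbb{R}^{N\times N}_{\mathrm{sym}} : \bm X\pm t\bm A\in\mathscr{E}_2^N \text{ for all sufficiently small } t>0\}$. For $\bm A\in\mathbb{R}^{N\times N}$, $\mathrm{vec}(\bm A)\in\mathbb{R}^{N^2}$ has entries $\mathrm{vec}(\bm A)_{(ij)} = A_{ij}$ (lexicographic order). A degree 4 pseudomoment matrix is a matrix $\bm Y \in \mathbb{R}^{N^2\times N^2}$, rows and columns indexed by pairs $(ij)\in[N]^2$ (lexicographically ordered), such that: (1) $\bm Y\succeq 0$; (2) $Y_{(ij)(kk)}$ does not depend on $k$; (3) $Y_{(ii)(ii)} = 1$ for all $i$; (4) $Y_{(ij)(k\ell)}$ is invariant under all permutations of the four indices $i,j,k,\ell$. Such $\bm Y$ extends $\bm X\in\mathbb{R}^{N\times N}_{\mathrm{sym}}$ if $Y_{(1i)(1j)} = X_{ij}$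 for all $i,j$. $\mathscr{E}_4^N$ is the set of symmetric $\bm X \in \mathbb{R}^{N\times N}$ that are extended by some degree 4 pseudomoment matrix. *)

theory Defs
  imports Complex_Main "HOL-Combinatorics.Permutations"
begin

text \<open>Conventions: indices are natural numbers starting at 0; the vectors
  \<open>v_1,\<dots>,v_N \<in> \<real>^r\<close> are rendered as \<open>v :: nat \<Rightarrow> nat \<Rightarrow> real\<close>, where \<open>v i\<close>
  (for \<open>i < N\<close>) is the i-th vector with coordinates \<open>v i k\<close> (for \<open>k < r\<close>).
  N x N matrices are functions \<open>nat \<Rightarrow> nat \<Rightarrow> real\<close> of which only the entries
  with indices below N matter; N^2 x N^2 matrices are functions on pairs.
  The paper's index 1 is index 0 here.\<close>

definition pairs :: "nat \<Rightarrow> (nat \<times> nat) set" where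
  "pairs N = {..<N} \<times> {..<N}"

definition psd_on :: "'i set \<Rightarrow> ('i \<Rightarrow> 'i \<Rightarrow> real) \<Rightarrow> bool" where
  "psd_on I M \<longleftrightarrow> (\<forall>p\<in>I. \<forall>q\<in>I. M p q = M q p) \<and>
     (\<forall>z. (\<Sum>p\<in>I. \<Sum>q\<in>I. z p * M p q * z q) \<ge> 0)"

definition UNTF :: "nat \<Rightarrow> nat \<Rightarrow> (nat \<Rightarrow> nat \<Rightarrow> real) \<Rightarrow> bool" where
  "UNTF N r v \<longleftrightarrow> (\<forall>i<N. (\<Sum>k<r. (v i k)^2) = 1) \<and>
     (\<forall>k<r. \<forall>l<r. (\<Sum>i<N. v i k * v i l) = (if k = l then real N / real r else 0))"

definition inner_v :: "nat \<Rightarrow> (nat \<Rightarrow> nat \<Rightarrow> real) \<Rightarrow> nat \<Rightarrow> nat \<Rightarrow> real" where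
  "inner_v r v i j = (\<Sum>k<r. v i k * v j k)"

definition ETF :: "nat \<Rightarrow> nat \<Rightarrow> (nat \<Rightarrow> nat \<Rightarrow> real) \<Rightarrow> bool" where
  "ETF N r v \<longleftrightarrow> UNTF N r v \<and>
     (\<exists>\<alpha>\<in>{0..1}. \<forall>i<N. \<forall>j<N. i \<noteq> j \<longrightarrow> \<bar>inner_v r v i j\<bar> = \<alpha>)"

definition Gram :: "nat \<Rightarrow> (nat \<Rightarrow> nat \<Rightarrow> real) \<Rightarrow> nat \<Rightarrow> nat \<Rightarrow> real" where
  "Gram r v = (\<lambda>i j. inner_v r v i j)"

definition sym_on :: "nat \<Rightarrow> (nat \<Rightarrow> nat \<Rightarrow> real) \<Rightarrow> bool" where
  "sym_on N X \<longleftrightarrow> (\<forall>i<N. \<forall>j<N. X i j = X j i)"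

definition E2 :: "nat \<Rightarrow> (nat \<Rightarrow> nat \<Rightarrow> real) \<Rightarrow> bool" where
  "E2 N X \<longleftrightarrow> sym_on N X \<and> psd_on {..<N} X \<and> (\<forall>i<N. X i i = 1)"

definition pert_E2 :: "nat \<Rightarrow> (nat \<Rightarrow> nat \<Rightarrow> real) \<Rightarrow> (nat \<Rightarrow> nat \<Rightarrow> real) set" where
  "pert_E2 N X = {A. sym_on N A \<and> (\<exists>\<epsilon>>0. \<forall>t. 0 < t \<and> t < \<epsilon> \<longrightarrow>
       E2 N (\<lambda>i j. X i j + t * A i j) \<and> E2 N (\<lambda>i j. X i j - t * A i j))}"

definition vec :: "(nat \<Rightarrow> nat \<Rightarrow> real) \<Rightarrow> nat \<times> nat \<Rightarrow> real" where
  "vec A = (\<lambda>(i,j). A i j)"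

definition vec_space :: "nat \<Rightarrow> (nat \<Rightarrow> nat \<Rightarrow> real) set \<Rightarrow> (nat \<times> nat \<Rightarrow> real) set" where
  "vec_space N S = {w. \<exists>A\<in>S. \<forall>p\<in>pairs N. w p = vec A p}"

definition orth_proj :: "nat \<Rightarrow> (nat \<times> nat \<Rightarrow> real) set \<Rightarrow>
     (nat \<times> nat \<Rightarrow> nat \<times> nat \<Rightarrow> real) \<Rightarrow> bool" where
  "orth_proj N S P \<longleftrightarrow> (\<forall>w. let Pw = (\<lambda>p. \<Sum>q\<in>pairs N. P p q * w q) in
       Pw \<in> S \<and> (\<forall>s\<in>S. (\<Sum>p\<in>pairs N. (w p - Pw p) * s p) = 0))"

definition pseudomoment4 :: "nat \<Rightarrow> (nat \<times> nat \<Rightarrow> nat \<times> nat \<Rightarrow> real) \<Rightarrow> bool" where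
  "pseudomoment4 N Y \<longleftrightarrow>
     psd_on (pairs N) Y \<and>
     (\<forall>i<N. \<forall>j<N. \<forall>k<N. \<forall>k'<N. Y (i,j) (k,k) = Y (i,j) (k',k')) \<and>
     (\<forall>i<N. Y (i,i) (i,i) = 1) \<and>
     (\<forall>(g::nat \<Rightarrow> nat) (\<sigma>::nat \<Rightarrow> nat). (\<forall>m<4. g m < N) \<longrightarrow> \<sigma> permutes {..<4} \<longrightarrow>
        Y (g 0, g 1) (g 2, g 3) = Y (g (\<sigma> 0), g (\<sigma> 1)) (g (\<sigma> 2), g (\<sigma> 3)))"

definition extends4 :: "nat \<Rightarrow> (nat \<times> nat \<Rightarrow> nat \<times> nat \<Rightarrow> real) \<Rightarrow> (nat \<Rightarrow> nat \<Rightarrow> real) \<Rightarrow> bool" where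
  "extends4 N Y X \<longleftrightarrow> (\<forall>i<N. \<forall>j<N. Y (0,i) (0,j) = X i j)"

definition E4 :: "nat \<Rightarrow> (nat \<Rightarrow> nat \<Rightarrow> real) \<Rightarrow> bool" where
  "E4 N X \<longleftrightarrow> sym_on N X \<and> (\<exists>Y. pseudomoment4 N Y \<and> extends4 N Y X)"

end

theory Submission
  imports Defs
begin

locale etf =
  fixes N r :: nat and v :: "nat \<Rightarrow> nat \<Rightarrow> real" and w :: real and X :: "nat \<Rightarrow> nat \<Rightarrow> real"
  assumes N1: "N \<ge> 1" and r1: "r \<ge> 1"
    and nrm: "\<And>i. i<N \<Longrightarrow> (\<Sum>k<r. (v i k)^2) = 1"
    and tight: "\<And>k l. k<r \<Longrightarrow> l<r \<Longrightarrow> (\<Sum>i<N. v i k * v i l) = (if k=l then real N / real r else 0)"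
    and w0: "0 \<le> w" and w1: "w \<le> 1"
    and weq: "\<And>i j. i<N \<Longrightarrow> j<N \<Longrightarrow> i\<noteq>j \<Longrightarrow> (X i j)^2 = w"
    and Xdef: "\<And>i j. X i j = (\<Sum>k<r. v i k * v j k)"
begin

lemma Xsym: "X i j = X j i"
  unfolding Xdef by (simp add: mult.commute)

lemma Xdiag: "i < N \<Longrightarrow> X i i = 1"
  unfolding Xdef using nrm by (simp add: power2_eq_square)

lemma X2: "(\<Sum>m<N. X i m * X m j) = real N / real r * X i j"
proof -
  have "(\<Sum>m<N. X i m * X m j) = (\<Sum>m<N. \<Sum>a<r. \<Sum>b<r. v i a * v j b * (v m a * v m b))"
    unfolding Xdef by (simp add: sum_product mult_ac)
  also have "\<dots> = (\<Sum>a<r. \<Sum>b<r. v i a * v j b * (\<Sum>m<N. v m a * v m b))"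
    by (simp add: sum_distrib_left sum.swap[of _ "{..<N}"])
  also have "\<dots> = (\<Sum>a<r. \<Sum>b<r. v i a * v j b * (if a = b then real N / real r else 0))"
    by (intro sum.cong refl) (simp add: tight)
  also have "\<dots> = real N / real r * X i j"
    unfolding Xdef by (simp add: sum_distrib_left mult_ac if_distrib cong: if_cong)
  finally show ?thesis .
qed

lemma Xsq: "i<N \<Longrightarrow> m<N \<Longrightarrow> (X i m)^2 = w + (1-w)*(if i=m then 1 else 0)"
  using weq Xdiag by auto

lemma welch: "real N / real r = 1 + (real N - 1) * w"
proof -
  have "(\<Sum>m<N. (X 0 m)^2) = (\<Sum>m<N. X 0 m * X m 0)"
    by (intro sum.cong refl) (metis Xsym power2_eq_square)
  also have "\<dots> = real N / real r" using X2[of 0 0] Xdiag[of 0] N1 by simp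
  finally have e1: "real N / real r = (\<Sum>m<N. (X 0 m)^2)" by simp
  also have "\<dots> = (\<Sum>m<N. w + (1-w)*(if 0=m then 1 else 0))"
    using N1 by (intro sum.cong refl) (simp add: Xsq)
  also have "\<dots> = real N * w + (1 - w)"
    using N1 by (simp add: sum.distrib sum_distrib_left[symmetric])
  finally show ?thesis by (simp add: algebra_simps)
qed

lemma r2_w: assumes "r \<ge> 2" shows "w < 1" "N \<ge> 2"
proof -
  have rp: "real r \<ge> 2" using assms by simp
  show "w < 1"
  proof (rule ccontr)
    assume "\<not> w < 1" then have "w = 1" using w1 by simp
    then have "real N / real r = real N" using welch by simp
    then show False using rp N1 by (simp add: field_simps)
  qed
  show "N \<ge> 2"
  proof (rule ccontr)
    assume "\<not> N \<ge> 2" then have "N = 1" using N1 by simp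
    then have "1 / real r = 1" using welch by simp
    then show False using rp by (simp add: field_simps)
  qed
qed

lemma psdX: "(\<Sum>i<N. \<Sum>j<N. z i * X i j * z j) = (\<Sum>a<r. (\<Sum>i<N. z i * v i a)^2)"
proof -
  have "(\<Sum>a<r. (\<Sum>i<N. z i * v i a)^2) = (\<Sum>a<r. \<Sum>i<N. \<Sum>j<N. z i * v i a * (z j * v j a))"
    by (simp add: power2_eq_square sum_product)
  also have "\<dots> = (\<Sum>i<N. \<Sum>a<r. \<Sum>j<N. z i * v i a * (z j * v j a))" by (rule sum.swap)
  also have "\<dots> = (\<Sum>i<N. \<Sum>j<N. \<Sum>a<r. z i * v i a * (z j * v j a))"
    by (rule sum.cong[OF refl], rule sum.swap)
  also have "\<dots> = (\<Sum>i<N. \<Sum>j<N. z i * X i j * z j)"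
    unfolding Xdef by (simp add: sum_distrib_left sum_distrib_right mult_ac)
  finally show ?thesis by simp
qed

end

lemma quad:
  fixes Z :: "'i \<Rightarrow> 'i \<Rightarrow> real" and F G :: "'i \<Rightarrow> 'i \<Rightarrow> 'm \<Rightarrow> real"
  assumes "finite I" "finite A"
  shows "(\<Sum>i\<in>I. \<Sum>j\<in>I. \<Sum>k\<in>I. \<Sum>l\<in>I. Z i j * (\<Sum>m\<in>A. F i j m * G k l m) * Z k l)
    = (\<Sum>m\<in>A. (\<Sum>i\<in>I. \<Sum>j\<in>I. Z i j * F i j m) * (\<Sum>k\<in>I. \<Sum>l\<in>I. Z k l * G k l m))"
proof -
  have "(\<Sum>m\<in>A. (\<Sum>i\<in>I. \<Sum>j\<in>I. Z i j * F i j m) * (\<Sum>k\<in>I. \<Sum>l\<in>I. Z k l * G k l m))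
     = (\<Sum>m\<in>A. (\<Sum>k\<in>I. \<Sum>l\<in>I. Z k l * G k l m) * (\<Sum>i\<in>I. \<Sum>j\<in>I. Z i j * F i j m))"
    by (simp add: mult.commute)
  also have "\<dots> = (\<Sum>m\<in>A. \<Sum>i\<in>I. \<Sum>j\<in>I. \<Sum>k\<in>I. \<Sum>l\<in>I. Z i j * F i j m * G k l m * Z k l)"
    by (simp only: sum_distrib_right sum_distrib_left) (simp add: mult_ac)
  also have "\<dots> = (\<Sum>i\<in>I. \<Sum>j\<in>I. \<Sum>k\<in>I. \<Sum>l\<in>I. \<Sum>m\<in>A. Z i j * F i j m * G k l m * Z k l)"
    by (simp only: sum.swap[where B=A])
  also have "\<dots> = (\<Sum>i\<in>I. \<Sum>j\<in>I. \<Sum>k\<in>I. \<Sum>l\<in>I. Z i j * (\<Sum>m\<in>A. F i j m * G k l m) * Z k l)"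
    by (simp add: sum_distrib_left sum_distrib_right mult_ac)
  finally show ?thesis by simp
qed


lemma keyalg:
  fixes n R w t SS Yv :: real
  assumes "R \<ge> 2" "n \<ge> 2" and wx: "n = R*(1-w) + R*n*w"
  shows "(1-w)*((1-w)*(SS - t^2/R) + n*t^2/R^2 - Yv) = (w*(n/R*t)^2 + (1-w)*Yv) - 2*(1-w)*Yv + (1-w)^2*SS + (R*(t*n*w/R)^2 - 2*(t*n*w/R)*(n/R*t) + 2*(1-w)*(t*n*w/R)*t)"
proof -
  have "R \<noteq> 0" using assms by auto
  have d: "(1-w)*((1-w)*(SS - t^2/R) + n*t^2/R^2 - Yv) - ((w*(n/R*t)^2 + (1-w)*Yv) - 2*(1-w)*Yv + (1-w)^2*SS + (R*(t*n*w/R)^2 - 2*(t*n*w/R)*(n/R*t) + 2*(1-w)*(t*n*w/R)*t))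
     = t^2/R^2 * (n*w) * (n - n*w*R - (1-w)*R) + t^2/R^2*((1-w)*(n - R*(1-w) - R*n*w))"
    using \<open>R \<noteq> 0\<close> by (simp add: field_simps power2_eq_square)
  have "n - n*w*R - (1-w)*R = 0" "n - R*(1-w) - R*n*w = 0" using wx by (simp_all add: algebra_simps)
  then show ?thesis using d by simp
qed

lemma swap4:
  fixes f :: "'a \<Rightarrow> 'a \<Rightarrow> 'b \<Rightarrow> 'b \<Rightarrow> real"
  shows "(\<Sum>a\<in>A. \<Sum>b\<in>A. \<Sum>m\<in>B. \<Sum>n\<in>B. f a b m n) = (\<Sum>m\<in>B. \<Sum>n\<in>B. \<Sum>a\<in>A. \<Sum>b\<in>A. f a b m n)"
  by (simp only: sum.swap[where A=A and B=B])

context etf begin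

lemma wexpr: assumes "r \<ge> 2" shows "w = (real N - real r) / (real r * (real N - 1))"
proof -
  have "N \<ge> 2" using r2_w assms by auto
  then have "real N - 1 > 0" "real r > 0" using assms by auto
  then show ?thesis using welch by (simp add: field_simps)
qed

lemma sumY: "(\<Sum>m<N. \<Sum>a<r. \<Sum>b<r. S a b * v m a * v m b) = real N / real r * (\<Sum>a<r. S a a)"
proof -
  have "(\<Sum>m<N. \<Sum>a<r. \<Sum>b<r. S a b * v m a * v m b) = (\<Sum>a<r. \<Sum>b<r. S a b * (\<Sum>m<N. v m a * v m b))"
    by (simp add: sum_distrib_left sum.swap[where B="{..<N}"] mult_ac)
  also have "\<dots> = (\<Sum>a<r. \<Sum>b<r. S a b * (if a = b then real N / real r else 0))"
    by (intro sum.cong refl) (simp add: tight)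
  also have "\<dots> = real N / real r * (\<Sum>a<r. S a a)"
    by (simp add: sum_distrib_left if_distrib mult.commute cong: if_cong)
  finally show ?thesis .
qed


lemma coreK:
  fixes S :: "nat \<Rightarrow> nat \<Rightarrow> real"
  assumes Ssym: "\<And>a b. S a b = S b a" and r2: "r \<ge> 2"
  shows "(\<Sum>m<N. (\<Sum>a<r. \<Sum>b<r. S a b * v m a * v m b)^2)
     \<le> (1-w)*((\<Sum>a<r. \<Sum>b<r. (S a b)^2) - (\<Sum>a<r. S a a)^2/r) + N*(\<Sum>a<r. S a a)^2/r^2"
proof -
  define t where "t = (\<Sum>a<r. S a a)"
  define SS where "SS = (\<Sum>a<r. \<Sum>b<r. (S a b)^2)"
  define y where "y = (\<lambda>m. \<Sum>a<r. \<Sum>b<r. S a b * v m a * v m b)"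
  define Yv where "Yv = (\<Sum>m<N. (y m)^2)"
  define W where "W = (\<lambda>a b. \<Sum>m<N. y m * v m a * v m b)"
  define \<kappa> where "\<kappa> = t * N * w / r"
  have sy: "(\<Sum>m<N. y m) = N / r * t" unfolding y_def t_def by (rule sumY)
  have WS: "(\<Sum>a<r. \<Sum>b<r. W a b * S a b) = Yv"
  proof -
    have "(\<Sum>a<r. \<Sum>b<r. W a b * S a b) = (\<Sum>m<N. y m * (\<Sum>a<r. \<Sum>b<r. S a b * v m a * v m b))"
      unfolding W_def by (simp add: sum_distrib_left sum_distrib_right sum.swap[where B="{..<N}"] mult_ac)
    then show ?thesis unfolding Yv_def y_def by (simp add: power2_eq_square)
  qed
  have trW: "(\<Sum>a<r. W a a) = N / r * t"
  proof -
    have "(\<Sum>a<r. W a a) = (\<Sum>m<N. y m * (\<Sum>a<r. (v m a)^2))"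
      unfolding W_def by (simp add: sum_distrib_left sum.swap[where B="{..<N}"] mult_ac power2_eq_square)
    also have "\<dots> = (\<Sum>m<N. y m)" by (intro sum.cong refl) (simp add: nrm)
    finally show ?thesis using sy by simp
  qed
  have WW: "(\<Sum>a<r. \<Sum>b<r. (W a b)^2) = w * (N / r * t)^2 + (1-w) * Yv"
  proof -
    have "(\<Sum>a<r. \<Sum>b<r. (W a b)^2) = (\<Sum>a<r. \<Sum>b<r. \<Sum>m<N. \<Sum>n<N. y m * y n * (v m a * v n a) * (v m b * v n b))"
      unfolding W_def power2_eq_square by (simp add: sum_product mult_ac)
    also have "\<dots> = (\<Sum>m<N. \<Sum>n<N. \<Sum>a<r. \<Sum>b<r. y m * y n * (v m a * v n a) * (v m b * v n b))"
      by (rule swap4)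
    also have "\<dots> = (\<Sum>m<N. \<Sum>n<N. y m * y n * (\<Sum>a<r. v m a * v n a) * (\<Sum>b<r. v m b * v n b))"
      by (simp add: sum_distrib_left sum_distrib_right mult_ac)
    also have "\<dots> = (\<Sum>m<N. \<Sum>n<N. y m * y n * (w + (1-w)*(if m = n then 1 else 0)))"
      by (intro sum.cong refl) (simp add: Xdef[symmetric] mult.assoc Xsq[symmetric] power2_eq_square)
    also have "\<dots> = (\<Sum>m<N. \<Sum>n<N. w*(y m*y n) + (if m=n then (1-w)*(y m*y m) else 0))"
      by (intro sum.cong refl) (auto simp: algebra_simps)
    also have "\<dots> = w * (\<Sum>m<N. y m)^2 + (1-w) * Yv"
      unfolding Yv_def power2_eq_square
      by (simp add: sum.distrib sum_distrib_left sum_distrib_right mult_ac)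
    finally show ?thesis using sy by simp
  qed
  have E0: "0 \<le> (\<Sum>a<r. \<Sum>b<r. (W a b - (1-w)*S a b - (if a=b then \<kappa> else 0))^2)"
    by (intro sum_nonneg) simp
  have sq: "\<And>a b. (W a b - (1-w)*S a b - (if a=b then \<kappa> else 0))^2 = (W a b)^2 - 2*(1-w)*(W a b*S a b) + (1-w)^2*(S a b)^2
       + (if a = b then \<kappa>^2 - 2*\<kappa>*W a a + 2*(1-w)*\<kappa>*S a a else 0)"
    by (auto simp: power2_eq_square algebra_simps)
  have E1: "(\<Sum>a<r. \<Sum>b<r. (W a b - (1-w)*S a b - (if a=b then \<kappa> else 0))^2)
     = (\<Sum>a<r. \<Sum>b<r. (W a b)^2) - 2*(1-w)*(\<Sum>a<r. \<Sum>b<r. W a b * S a b) + (1-w)^2 * SS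
       + (r * \<kappa>^2 - 2*\<kappa>*(\<Sum>a<r. W a a) + 2*(1-w)*\<kappa>*t)"
    unfolding sq SS_def t_def
    by (simp add: sum.distrib sum_subtractf sum_distrib_left sum.delta)
  have "N \<ge> 2" "w < 1" using r2_w r2 by auto
  then have rp: "real r \<ge> 2" "real N \<ge> 2" using r2 by auto
  have wx: "w = (real N - real r) / (real r * (real N - 1))" using wexpr r2 by simp
  have key: "(1-w)*((1-w)*(SS - t^2/r) + N*t^2/(real r)^2 - Yv)
     = (\<Sum>a<r. \<Sum>b<r. (W a b)^2) - 2*(1-w)*(\<Sum>a<r. \<Sum>b<r. W a b * S a b) + (1-w)^2 * SS
       + (r * \<kappa>^2 - 2*\<kappa>*(\<Sum>a<r. W a a) + 2*(1-w)*\<kappa>*t)"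
    unfolding WW WS trW \<kappa>_def
    by (rule keyalg) (use rp welch in \<open>auto simp: field_simps\<close>)
  have "0 \<le> (1-w)*((1-w)*(SS - t^2/r) + N*t^2/(real r)^2 - Yv)"
    using E0 E1 key by simp
  then have "0 \<le> (1-w)*(SS - t^2/r) + N*t^2/(real r)^2 - Yv"
    using \<open>w < 1\<close> by (simp add: zero_le_mult_iff)
  then show ?thesis unfolding Yv_def y_def SS_def t_def by simp
qed

end

lemma pairs_sum: "(\<Sum>p\<in>pairs N. f p) = (\<Sum>i<N. \<Sum>j<N. f (i,j))"
  unfolding pairs_def by (simp add: sum.cartesian_product)

lemma prod_sum: "(\<Sum>p\<in>A\<times>B. g p) = (\<Sum>a\<in>A. \<Sum>b\<in>B. g (a,b))"
  by (simp add: sum.cartesian_product)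

lemma finalalg:
  fixes n R w t SS T4 c :: real
  assumes R2: "R \<ge> 2" and n2: "n \<ge> 2" and wx: "w = (n - R) / (R * (n - 1))"
    and cdef: "c = R * (R + 1) / 2 - n" and cpos: "c > 0"
    and K: "T4 \<le> (1-w)*(SS - t^2/R) + n*t^2/R^2"
  shows "0 \<le> (R * (R - 1) / 2) / c * (t^2 + 2*SS) - (R^2 * (1 - 1/n)) / c * T4"
proof -
  have B0: "0 \<le> (R^2 * (1 - 1/n)) / c" using n2 cpos by (intro divide_nonneg_pos mult_nonneg_nonneg) (auto simp: field_simps)
  have "(R^2 * (1 - 1/n)) / c * T4 \<le> (R^2 * (1 - 1/n)) / c * ((1-w)*(SS - t^2/R) + n*t^2/R^2)"
    using mult_left_mono[OF K B0] .
  moreover have "(R * (R - 1) / 2) / c * (t^2 + 2*SS) - (R^2 * (1 - 1/n)) / c * ((1-w)*(SS - t^2/R) + n*t^2/R^2) = t^2"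
  proof -
    have n1: "n - 1 \<noteq> 0" "n \<noteq> 0" "R \<noteq> 0" using n2 R2 by auto
    have h1: "(R^2 * (1 - 1/n)) * (1-w) = R*(R-1)" unfolding wx using n1
      by (simp add: field_simps power2_eq_square)
    have h2: "(R^2 * (1 - 1/n)) * (n*t^2/R^2) = (n-1)*t^2" using n1
      by (simp add: field_simps power2_eq_square)
    have "(R^2 * (1 - 1/n)) * ((1-w)*(SS - t^2/R) + n*t^2/R^2) = ((R^2 * (1 - 1/n)) * (1-w))*(SS - t^2/R) + (R^2 * (1 - 1/n)) * (n*t^2/R^2)"
      by (simp only: distrib_left mult.assoc)
    also have "\<dots> = R*(R-1)*(SS - t^2/R) + (n-1)*t^2" by (simp only: h1 h2)
    finally have "(R^2 * (1 - 1/n)) * ((1-w)*(SS - t^2/R) + n*t^2/R^2) = R*(R-1)*(SS - t^2/R) + (n-1)*t^2" .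
    then have "(R * (R - 1) / 2) / c * (t^2 + 2*SS) - (R^2 * (1 - 1/n)) / c * ((1-w)*(SS - t^2/R) + n*t^2/R^2)
      = ((R * (R - 1) / 2) * (t^2 + 2*SS) - (R*(R-1)*(SS - t^2/R) + (n-1)*t^2)) / c"
      by (simp add: diff_divide_distrib)
    also have "\<dots> = t^2 * c / c"
    proof -
      have "(R * (R - 1) / 2) * (t^2 + 2*SS) - (R*(R-1)*(SS - t^2/R) + (n-1)*t^2) = t^2 * c"
        unfolding cdef using n1 by (simp add: field_simps power2_eq_square)
      then show ?thesis by simp
    qed
    finally show ?thesis using cpos by simp
  qed
  ultimately show ?thesis by (smt (verit) zero_le_power2)
qed

context etf begin

lemma XX_prod: "X i k * X j l = (\<Sum>p\<in>{..<r}\<times>{..<r}. (v i (fst p) * v j (snd p)) * (v k (fst p) * v l (snd p)))"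
  unfolding Xdef prod_sum by (simp add: sum_product mult_ac)

lemma quadform:
  fixes Z :: "nat \<Rightarrow> nat \<Rightarrow> real"
  assumes r2: "r \<ge> 2" and cdef: "c = real r * (real r + 1) / 2 - real N" and cpos: "c > 0"
  defines "A \<equiv> (real r * (real r - 1) / 2) / c" and "B \<equiv> (real r ^ 2 * (1 - 1 / real N)) / c"
  shows "0 \<le> (\<Sum>i<N. \<Sum>j<N. \<Sum>k<N. \<Sum>l<N. Z i j *
     (A * (X i j * X k l + X i k * X j l + X i l * X j k) - B * (\<Sum>m<N. X i m * X j m * X k m * X l m)) * Z k l)"
proof -
  define M where "M = (\<lambda>a b. \<Sum>i<N. \<Sum>j<N. Z i j * v i a * v j b)"
  define S where "S = (\<lambda>a b. (M a b + M b a) / 2)"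
  define T1 where "T1 = (\<Sum>i<N. \<Sum>j<N. \<Sum>k<N. \<Sum>l<N. Z i j * (X i j * X k l) * Z k l)"
  define T2 where "T2 = (\<Sum>i<N. \<Sum>j<N. \<Sum>k<N. \<Sum>l<N. Z i j * (X i k * X j l) * Z k l)"
  define T3 where "T3 = (\<Sum>i<N. \<Sum>j<N. \<Sum>k<N. \<Sum>l<N. Z i j * (X i l * X j k) * Z k l)"
  define T4 where "T4 = (\<Sum>i<N. \<Sum>j<N. \<Sum>k<N. \<Sum>l<N. Z i j * (\<Sum>m<N. X i m * X j m * X k m * X l m) * Z k l)"
  have split: "(\<Sum>i<N. \<Sum>j<N. \<Sum>k<N. \<Sum>l<N. Z i j *
     (A * (X i j * X k l + X i k * X j l + X i l * X j k) - B * (\<Sum>m<N. X i m * X j m * X k m * X l m)) * Z k l)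
     = A * (T1 + T2 + T3) - B * T4"
    unfolding T1_def T2_def T3_def T4_def
    by (simp add: algebra_simps sum.distrib sum_subtractf sum_distrib_left)
  have fin: "finite ({..<r}\<times>{..<r})" by simp
  have T1: "T1 = (\<Sum>a<r. S a a)^2"
  proof -
    have "T1 = (\<Sum>i<N. \<Sum>j<N. \<Sum>k<N. \<Sum>l<N. Z i j * (\<Sum>p\<in>{..<r}\<times>{..<r}. (v i (fst p) * v j (fst p)) * (v k (snd p) * v l (snd p))) * Z k l)"
      unfolding T1_def XX_prod by (simp add: mult_ac)
    also have "\<dots> = (\<Sum>p\<in>{..<r}\<times>{..<r}. (\<Sum>i<N. \<Sum>j<N. Z i j * (v i (fst p) * v j (fst p))) * (\<Sum>k<N. \<Sum>l<N. Z k l * (v k (snd p) * v l (snd p))))"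
      by (rule quad) simp_all
    also have "\<dots> = (\<Sum>p\<in>{..<r}\<times>{..<r}. M (fst p) (fst p) * M (snd p) (snd p))"
      unfolding M_def by (simp add: mult_ac)
    also have "\<dots> = (\<Sum>a<r. M a a)^2"
      unfolding prod_sum by (simp add: power2_eq_square sum_product)
    finally show ?thesis unfolding S_def by simp
  qed
  have T2: "T2 = (\<Sum>a<r. \<Sum>b<r. M a b * M a b)"
  proof -
    have "T2 = (\<Sum>i<N. \<Sum>j<N. \<Sum>k<N. \<Sum>l<N. Z i j * (\<Sum>p\<in>{..<r}\<times>{..<r}. (v i (fst p) * v j (snd p)) * (v k (fst p) * v l (snd p))) * Z k l)"
      unfolding T2_def XX_prod by (simp add: mult_ac)
    also have "\<dots> = (\<Sum>p\<in>{..<r}\<times>{..<r}. (\<Sum>i<N. \<Sum>j<N. Z i j * (v i (fst p) * v j (snd p))) * (\<Sum>k<N. \<Sum>l<N. Z k l * (v k (fst p) * v l (snd p))))"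
      by (rule quad) simp_all
    also have "\<dots> = (\<Sum>p\<in>{..<r}\<times>{..<r}. M (fst p) (snd p) * M (fst p) (snd p))"
      unfolding M_def by (simp add: mult_ac)
    finally show ?thesis unfolding prod_sum by simp
  qed
  have T3: "T3 = (\<Sum>a<r. \<Sum>b<r. M a b * M b a)"
  proof -
    have "T3 = (\<Sum>i<N. \<Sum>j<N. \<Sum>k<N. \<Sum>l<N. Z i j * (\<Sum>p\<in>{..<r}\<times>{..<r}. (v i (fst p) * v j (snd p)) * (v k (snd p) * v l (fst p))) * Z k l)"
      unfolding T3_def XX_prod by (simp add: mult_ac)
    also have "\<dots> = (\<Sum>p\<in>{..<r}\<times>{..<r}. (\<Sum>i<N. \<Sum>j<N. Z i j * (v i (fst p) * v j (snd p))) * (\<Sum>k<N. \<Sum>l<N. Z k l * (v k (snd p) * v l (fst p))))"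
      by (rule quad) simp_all
    also have "\<dots> = (\<Sum>p\<in>{..<r}\<times>{..<r}. M (fst p) (snd p) * M (snd p) (fst p))"
      unfolding M_def by (simp add: mult_ac)
    finally show ?thesis unfolding prod_sum by simp
  qed
  have inner: "\<And>m. (\<Sum>i<N. \<Sum>j<N. Z i j * (X i m * X j m)) = (\<Sum>a<r. \<Sum>b<r. S a b * v m a * v m b)"
  proof -
    fix m
    have "(\<Sum>i<N. \<Sum>j<N. Z i j * (X i m * X j m)) = (\<Sum>i<N. \<Sum>j<N. \<Sum>b<r. \<Sum>a<r. Z i j * v i a * v j b * (v m a * v m b))"
      unfolding Xdef by (simp add: sum_product sum_distrib_left mult_ac)
    also have "\<dots> = (\<Sum>b<r. \<Sum>a<r. \<Sum>i<N. \<Sum>j<N. Z i j * v i a * v j b * (v m a * v m b))"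
      by (rule swap4)
    also have "\<dots> = (\<Sum>b<r. \<Sum>a<r. M a b * v m a * v m b)"
      unfolding M_def by (simp add: sum_distrib_left sum_distrib_right mult_ac)
    also have "\<dots> = (\<Sum>a<r. \<Sum>b<r. M a b * v m a * v m b)"
      by (rule sum.swap)
    also have "\<dots> = (\<Sum>a<r. \<Sum>b<r. S a b * v m a * v m b)"
    proof -
      have "(\<Sum>a<r. \<Sum>b<r. M b a * v m a * v m b) = (\<Sum>a<r. \<Sum>b<r. M a b * v m a * v m b)"
        by (subst sum.swap) (simp add: mult_ac)
      then show ?thesis unfolding S_def
        by (simp add: add_divide_distrib sum.distrib algebra_simps sum_divide_distrib[symmetric])
    qed
    finally show "(\<Sum>i<N. \<Sum>j<N. Z i j * (X i m * X j m)) = (\<Sum>a<r. \<Sum>b<r. S a b * v m a * v m b)" .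
  qed
  have T4: "T4 = (\<Sum>m<N. (\<Sum>a<r. \<Sum>b<r. S a b * v m a * v m b)^2)"
  proof -
    have "T4 = (\<Sum>i<N. \<Sum>j<N. \<Sum>k<N. \<Sum>l<N. Z i j * (\<Sum>m<N. (X i m * X j m) * (X k m * X l m)) * Z k l)"
      unfolding T4_def by (simp add: mult_ac)
    also have "\<dots> = (\<Sum>m<N. (\<Sum>i<N. \<Sum>j<N. Z i j * (X i m * X j m)) * (\<Sum>k<N. \<Sum>l<N. Z k l * (X k m * X l m)))"
      by (rule quad) simp_all
    finally show ?thesis unfolding inner by (simp add: power2_eq_square)
  qed
  have T23: "T2 + T3 = 2 * (\<Sum>a<r. \<Sum>b<r. (S a b)^2)"
  proof -
    have sw: "(\<Sum>a<r. \<Sum>b<r. M b a * M b a) = (\<Sum>a<r. \<Sum>b<r. M a b * M a b)"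
      by (rule sum.swap)
    have "2 * (\<Sum>a<r. \<Sum>b<r. (S a b)^2) = (\<Sum>a<r. \<Sum>b<r. (M a b * M a b + M b a * M b a)/2 + M a b * M b a)"
      unfolding S_def by (simp add: sum_distrib_left power2_eq_square algebra_simps add_divide_distrib)
    also have "\<dots> = T2 + T3" unfolding T2 T3
      by (simp add: sum.distrib sum_divide_distrib[symmetric] sw)
    finally show ?thesis by simp
  qed
  have T1': "T1 = (\<Sum>a<r. S a a)^2" using T1 unfolding S_def by simp
  have K: "T4 \<le> (1-w)*((\<Sum>a<r. \<Sum>b<r. (S a b)^2) - (\<Sum>a<r. S a a)^2/r) + N*(\<Sum>a<r. S a a)^2/r^2"
    unfolding T4 by (rule coreK) (auto simp: S_def r2)
  have N2: "N \<ge> 2" using r2_w r2 by auto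
  have K': "T4 \<le> (1-w)*((\<Sum>a<r. \<Sum>b<r. (S a b)^2) - (\<Sum>a<r. S a a)^2/real r) + real N*(\<Sum>a<r. S a a)^2/(real r)^2"
    using K by simp
  have "0 \<le> A * ((\<Sum>a<r. S a a)^2 + 2*(\<Sum>a<r. \<Sum>b<r. (S a b)^2)) - B * T4"
    unfolding A_def B_def
    by (rule finalalg[OF _ _ wexpr[OF r2] cdef cpos K']) (use r2 N2 in auto)
  then show ?thesis unfolding split T1' using T23 by (simp add: add.assoc)
qed

end

lemma perm_inv:
  fixes H :: "(nat \<Rightarrow> nat) \<Rightarrow> real"
  assumes tr: "\<And>g a b. a < 4 \<Longrightarrow> b < 4 \<Longrightarrow> H (g \<circ> Transposition.transpose a b) = H g"
    and p: "\<sigma> permutes {..<4}"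
  shows "H (g \<circ> \<sigma>) = H g"
proof -
  have "\<forall>g. H (g \<circ> \<sigma>) = H g"
    using p finite_lessThan
  proof (induction rule: permutes_induct)
    case id then show ?case by simp
  next
    case (swap a b p)
    show ?case
    proof
      fix g
      have "H (g \<circ> (Transposition.transpose a b \<circ> p)) = H ((g \<circ> Transposition.transpose a b) \<circ> p)"
        by (simp add: o_assoc)
      also have "\<dots> = H (g \<circ> Transposition.transpose a b)" using swap by blast
      also have "\<dots> = H g" using tr swap by simp
      finally show "H (g \<circ> (Transposition.transpose a b \<circ> p)) = H g" .
    qed
  qed
  then show ?thesis by blast
qed

lemma perm_inv4:
  fixes F :: "nat \<Rightarrow> nat \<Rightarrow> nat \<Rightarrow> nat \<Rightarrow> real" and \<sigma> g :: "nat \<Rightarrow> nat"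
  assumes s01: "\<And>i j k l. F j i k l = F i j k l"
    and s12: "\<And>i j k l. F i k j l = F i j k l"
    and s23: "\<And>i j k l. F i j l k = F i j k l"
    and p: "\<sigma> permutes {..<4}"
  shows "F (g (\<sigma> 0)) (g (\<sigma> 1)) (g (\<sigma> 2)) (g (\<sigma> 3)) = F (g 0) (g 1) (g 2) (g 3)"
proof -
  have s02: "\<And>i j k l. F k j i l = F i j k l" by (metis s01 s12)
  have s03: "\<And>i j k l. F l j k i = F i j k l" by (metis s01 s12 s23)
  have s13: "\<And>i j k l. F i l k j = F i j k l" by (metis s12 s23)
  let ?H = "\<lambda>g. F (g 0) (g 1) (g 2) (g 3)"
  have "?H (g \<circ> \<sigma>) = ?H g"
  proof (rule perm_inv[OF _ p])
    fix g :: "nat \<Rightarrow> nat" and a b :: nat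
    assume "a < 4" "b < 4"
    then have "a \<in> {0,1,2,3}" "b \<in> {0,1,2,3}" by auto
    then show "?H (g \<circ> Transposition.transpose a b) = ?H g"
      by (auto simp: transpose_def s01 s12 s23 s02 s03 s13)
  qed
  then show ?thesis by simp
qed


lemma pm4_intro:
  fixes F :: "nat \<Rightarrow> nat \<Rightarrow> nat \<Rightarrow> nat \<Rightarrow> real" and Y :: "nat \<times> nat \<Rightarrow> nat \<times> nat \<Rightarrow> real"
  assumes Yf: "\<And>i j k l. Y (i,j) (k,l) = F i j k l"
    and s01: "\<And>i j k l. F j i k l = F i j k l"
    and s12: "\<And>i j k l. F i k j l = F i j k l"
    and s23: "\<And>i j k l. F i j l k = F i j k l"
    and psd: "\<And>z. 0 \<le> (\<Sum>p\<in>pairs N. \<Sum>q\<in>pairs N. z p * Y p q * z q)"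
    and kk: "\<And>i j k k'. i<N \<Longrightarrow> j<N \<Longrightarrow> k<N \<Longrightarrow> k'<N \<Longrightarrow> F i j k k = F i j k' k'"
    and one: "\<And>i. i<N \<Longrightarrow> F i i i i = 1"
  shows "pseudomoment4 N Y"
proof -
  have sw: "F k l i j = F i j k l" for i j k l
  proof -
    have "F k l i j = F k i l j" using s12[of k i l j] by simp
    also have "\<dots> = F i k l j" using s01[of i k l j] by simp
    also have "\<dots> = F i k j l" using s23[of i k j l] by simp
    also have "\<dots> = F i j k l" using s12[of i j k l] by simp
    finally show ?thesis .
  qed
  have "psd_on (pairs N) Y"
    unfolding psd_on_def using psd by (auto simp: Yf intro: sw)
  moreover have "\<forall>(g::nat \<Rightarrow> nat) (\<sigma>::nat \<Rightarrow> nat). (\<forall>m<4. g m < N) \<longrightarrow> \<sigma> permutes {..<4} \<longrightarrow>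
        Y (g 0, g 1) (g 2, g 3) = Y (g (\<sigma> 0), g (\<sigma> 1)) (g (\<sigma> 2), g (\<sigma> 3))"
  proof (intro allI impI)
    fix g \<sigma> :: "nat \<Rightarrow> nat" assume "\<sigma> permutes {..<4}"
    from perm_inv4[OF s01 s12 s23 this, where g=g]
    show "Y (g 0, g 1) (g 2, g 3) = Y (g (\<sigma> 0), g (\<sigma> 1)) (g (\<sigma> 2), g (\<sigma> 3))"
      apply (simp add: Yf)
      apply (drule meta_spec[of _ "\<lambda>x. x"])
      by simp
  qed
  moreover have "\<forall>i<N. \<forall>j<N. \<forall>k<N. \<forall>k'<N. Y (i,j) (k,k) = Y (i,j) (k',k')"
    using kk by (simp only: Yf) blast
  moreover have "\<forall>i<N. Y (i,i) (i,i) = 1" using one by (simp only: Yf) blast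
  ultimately show ?thesis unfolding pseudomoment4_def by blast
qed

lemma pmalg:
  fixes n R w c :: real
  assumes R2: "R \<ge> 2" and n2: "n \<ge> 2" and wx: "w = (n - R) / (R * (n - 1))"
    and cdef: "c = R * (R + 1) / 2 - n" and cpos: "c > 0"
  shows "(R * (R - 1) / 2) / c * 2 = (R^2 * (1 - 1/n)) / c * (1-w)"
    "(R * (R - 1) / 2) / c - (R^2 * (1 - 1/n)) / c * (w * (n / R)) = 1"
proof -
  have n1: "n - 1 \<noteq> 0" "n \<noteq> 0" "R \<noteq> 0" "c \<noteq> 0" using n2 R2 cpos by auto
  show "(R * (R - 1) / 2) / c * 2 = (R^2 * (1 - 1/n)) / c * (1-w)"
    unfolding wx using n1 by (simp add: field_simps power2_eq_square)
  have "(R * (R - 1) / 2) - (R^2 * (1 - 1/n)) * (w * (n / R)) = c"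
    unfolding wx cdef using n1 by (simp add: field_simps power2_eq_square)
  moreover have "(R * (R - 1) / 2) / c - (R^2 * (1 - 1/n)) / c * (w * (n / R))
      = ((R * (R - 1) / 2) - (R^2 * (1 - 1/n)) * (w * (n / R))) / c"
    by (simp add: diff_divide_distrib)
  ultimately show "(R * (R - 1) / 2) / c - (R^2 * (1 - 1/n)) / c * (w * (n / R)) = 1"
    using n1 by simp
qed

locale etf2 = etf +
  fixes c :: real
  assumes r2: "r \<ge> 2" and cdef: "c = real r * (real r + 1) / 2 - real N" and cpos: "c > 0"
begin

definition "Aco = (real r * (real r - 1) / 2) / c"
definition "Bco = (real r ^ 2 * (1 - 1 / real N)) / c"
definition "YF i j k l = Aco * (X i j * X k l + X i k * X j l + X i l * X j k) - Bco * (\<Sum>m<N. X i m * X j m * X k m * X l m)"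

lemma N2: "N \<ge> 2" and wlt: "w < 1" using r2_w r2 by auto

lemma X2': "(\<Sum>m<N. X i m * X j m) = real N / real r * X i j"
proof -
  have "(\<Sum>m<N. X i m * X j m) = (\<Sum>m<N. X i m * X m j)" by (intro sum.cong refl) (metis Xsym)
  then show ?thesis using X2 by simp
qed

lemma L6: assumes "k < N"
  shows "(\<Sum>m<N. X i m * X j m * X k m * X k m) = w * (real N / real r) * X i j + (1-w) * (X i k * X j k)"
proof -
  have "(\<Sum>m<N. X i m * X j m * X k m * X k m) = (\<Sum>m<N. w * (X i m * X j m) + (if m = k then (1-w) * (X i k * X j k) else 0))"
  proof (intro sum.cong refl)
    fix m assume "m \<in> {..<N}"
    then have "X k m * X k m = w + (1-w)*(if k=m then 1 else 0)" using Xsq[OF assms] by (simp add: power2_eq_square)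
    then show "X i m * X j m * X k m * X k m = w * (X i m * X j m) + (if m = k then (1-w) * (X i k * X j k) else 0)"
      by (auto simp: algebra_simps)
  qed
  also have "\<dots> = w * (real N / real r) * X i j + (1-w) * (X i k * X j k)"
    using assms by (simp add: sum.distrib sum_distrib_left[symmetric] X2')
  finally show ?thesis .
qed

lemma YF_kk: assumes "i<N" "j<N" "k<N" shows "YF i j k k = X i j"
proof -
  have alg: "Aco * 2 = Bco * (1-w)" "Aco - Bco * (w * (real N / real r)) = 1"
    unfolding Aco_def Bco_def using pmalg[OF _ _ wexpr[OF r2] cdef cpos] r2 N2 by auto
  have "YF i j k k = Aco * X i j + (Aco * 2) * (X i k * X j k) - Bco * (w * (real N / real r) * X i j + (1-w) * (X i k * X j k))"
    unfolding YF_def L6[OF assms(3)] using Xdiag[OF assms(3)] by (simp add: algebra_simps Xsym[of k j])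
  also have "\<dots> = (Aco - Bco * (w * (real N / real r))) * X i j + (Aco * 2 - Bco * (1-w)) * (X i k * X j k)"
    by (simp add: algebra_simps)
  finally show ?thesis using alg by simp
qed

lemma YF_s01: "YF j i k l = YF i j k l"
  unfolding YF_def by (simp add: Xsym[of j i] algebra_simps)
lemma YF_s12: "YF i k j l = YF i j k l"
  unfolding YF_def by (simp add: Xsym[of k j] algebra_simps)
lemma YF_s23: "YF i j l k = YF i j k l"
  unfolding YF_def by (simp add: Xsym[of l k] algebra_simps)

lemma YF_psd: "0 \<le> (\<Sum>p\<in>pairs N. \<Sum>q\<in>pairs N. z p * (\<lambda>(i,j) (k,l). YF i j k l) p q * z q)"
  unfolding pairs_sum YF_def Aco_def Bco_def using quadform[OF r2 cdef cpos, of "\<lambda>i j. z (i,j)"] by simp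

lemma YF_pm: "pseudomoment4 N (\<lambda>(i,j) (k,l). YF i j k l)"
  by (rule pm4_intro[where F=YF]) (auto simp: YF_s01 YF_s12 YF_s23 YF_psd YF_kk Xdiag)

lemma YF_ext: "extends4 N (\<lambda>(i,j) (k,l). YF i j k l) X"
proof -
  have "\<And>i j. YF 0 i 0 j = YF i j 0 0" by (metis YF_s01 YF_s12 YF_s23)
  then show ?thesis unfolding extends4_def using YF_kk N1 by auto
qed

end

context etf begin

lemma r1_case: assumes "r = 1"
  shows "\<exists>x :: nat \<Rightarrow> real. (\<forall>i<N. x i \<in> {-1, 1}) \<and>
          (\<forall>i<N. \<forall>j<N. X i j = x i * x j) \<and>
          pseudomoment4 N (\<lambda>(i,j) (k,l). x i * x j * x k * x l) \<and>
          extends4 N (\<lambda>(i,j) (k,l). x i * x j * x k * x l) X"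
proof -
  define x where "x = (\<lambda>i. v i 0)"
  have Xx: "X i j = x i * x j" for i j unfolding Xdef x_def assms by simp
  have xsq: "x i * x i = 1" if "i < N" for i using nrm[OF that] unfolding x_def assms by (simp add: power2_eq_square)
  have x1: "x i \<in> {-1, 1}" if "i < N" for i
  proof -
    have "(x i - 1) * (x i + 1) = 0" using xsq[OF that] by (simp add: algebra_simps)
    then show ?thesis by auto
  qed
  define Y where "Y = (\<lambda>(i,j) (k,l). x i * x j * x k * x l)"
  define f where "f = (\<lambda>(i,j). x i * x j)"
  have Yf: "Y p q = f p * f q" for p q by (cases p; cases q) (simp add: Y_def f_def mult_ac)
  have "pseudomoment4 N Y"
  proof (rule pm4_intro[where F="\<lambda>i j k l. x i * x j * x k * x l"])
    fix z :: "nat \<times> nat \<Rightarrow> real"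
    have "(\<Sum>p\<in>pairs N. \<Sum>q\<in>pairs N. z p * Y p q * z q) = (\<Sum>p\<in>pairs N. z p * f p)^2"
      unfolding Yf power2_eq_square by (simp add: sum_product mult_ac)
    then show "0 \<le> (\<Sum>p\<in>pairs N. \<Sum>q\<in>pairs N. z p * Y p q * z q)" by simp
  next
    fix i j k k' assume "i<N" "j<N" "k<N" "k'<N"
    then show "x i * x j * x k * x k = x i * x j * x k' * x k'"
      using xsq by (simp add: mult.assoc)
  next
    fix i assume "i<N"
    then show "x i * x i * x i * x i = 1" using xsq by (simp add: mult.assoc)
  qed (auto simp: Y_def mult_ac)
  moreover have "extends4 N Y X"
    unfolding extends4_def Y_def using xsq[of 0] N1 by (simp add: Xx mult.assoc[symmetric])
  ultimately show ?thesis using x1 Xx unfolding Y_def by blast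
qed

end

context etf begin

lemma PPlem: "(\<Sum>a<r. \<Sum>b<r. (\<Sum>m<N. y m * v m a * v m b)^2) = w * (\<Sum>m<N. y m)^2 + (1-w) * (\<Sum>m<N. (y m)^2)"
proof -
    have "(\<Sum>a<r. \<Sum>b<r. (\<Sum>m<N. y m * v m a * v m b)^2) = (\<Sum>a<r. \<Sum>b<r. \<Sum>m<N. \<Sum>n<N. y m * y n * (v m a * v n a) * (v m b * v n b))"
      unfolding power2_eq_square by (simp add: sum_product mult_ac)
    also have "\<dots> = (\<Sum>m<N. \<Sum>n<N. \<Sum>a<r. \<Sum>b<r. y m * y n * (v m a * v n a) * (v m b * v n b))"
      by (rule swap4)
    also have "\<dots> = (\<Sum>m<N. \<Sum>n<N. y m * y n * (\<Sum>a<r. v m a * v n a) * (\<Sum>b<r. v m b * v n b))"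
      by (simp add: sum_distrib_left sum_distrib_right mult_ac)
    also have "\<dots> = (\<Sum>m<N. \<Sum>n<N. y m * y n * (w + (1-w)*(if m = n then 1 else 0)))"
      by (intro sum.cong refl) (simp add: Xdef[symmetric] mult.assoc Xsq[symmetric] power2_eq_square)
    also have "\<dots> = (\<Sum>m<N. \<Sum>n<N. w*(y m*y n) + (if m=n then (1-w)*(y m*y m) else 0))"
      by (intro sum.cong refl) (auto simp: algebra_simps)
    also have "\<dots> = w * (\<Sum>m<N. y m)^2 + (1-w) * (\<Sum>m<N. (y m)^2)"
      unfolding power2_eq_square
      by (simp add: sum.distrib sum_distrib_left sum_distrib_right mult_ac)
    finally show ?thesis .
qed

lemma Fsum: fixes g :: "nat \<Rightarrow> nat \<Rightarrow> real" assumes "a < r" "b < r"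
  shows "(\<Sum>c<r. \<Sum>d<r. g c d * ((if c = a \<and> d = b then 1/2 else 0) + (if c = b \<and> d = a then 1/2 else 0)))
     = (g a b + g b a) / 2"
proof -
  have e: "g c d * ((if c = a \<and> d = b then 1/2 else 0) + (if c = b \<and> d = a then 1/2 else 0))
    = (if d = b then (if c = a then g c d/2 else 0) else 0) + (if d = a then (if c = b then g c d/2 else 0) else 0)" for c d
    by auto
  show ?thesis unfolding e using assms by (simp add: sum.distrib add_divide_distrib)
qed

lemma gerzon:
  assumes r2: "r \<ge> 2"
  shows "real N \<le> real r * (real r + 1) / 2"
    and "real N = real r * (real r + 1) / 2 \<Longrightarrow> (\<And>a b. S a b = S b a) \<Longrightarrow>
          (\<And>m. m < N \<Longrightarrow> (\<Sum>c<r. \<Sum>d<r. S c d * v m c * v m d) = 0) \<Longrightarrow> a < r \<Longrightarrow> b < r \<Longrightarrow> S a b = 0"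
proof -
  have wl: "w < 1" and N2: "N \<ge> 2" using r2_w r2 by auto
  define \<delta> where "\<delta> = (\<lambda>a b::nat. if a = b then 1 else (0::real))"
  define cc where "cc = (\<lambda>a b m::nat. (v m a * v m b - w * \<delta> a b) / (1-w))"
  define P where "P = (\<lambda>a b c d::nat. \<Sum>m<N. cc a b m * v m c * v m d)"
  define F where "F = (\<lambda>a b c d::nat. (if c = a \<and> d = b then 1/2 else 0) + (if c = b \<and> d = a then 1/2 else (0::real)))"
  define q where "q = (\<lambda>a b::nat. \<Sum>m<N. cc a b m * (v m a * v m b))"
  define nF where "nF = (\<lambda>a b::nat. if a = b then 1 else (1/2::real))"
  have sumcc: "(\<Sum>m<N. cc a b m) = \<delta> a b" if "a<r" "b<r" for a b
  proof -
    have "(\<Sum>m<N. cc a b m) = ((\<Sum>m<N. v m a * v m b) - N * w * \<delta> a b) / (1-w)"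
      unfolding cc_def by (simp add: sum_divide_distrib[symmetric] sum_subtractf)
    also have "\<dots> = \<delta> a b * ((N / r - N * w) / (1-w))"
      using that by (simp add: tight \<delta>_def)
    also have "(N / r - N * w) = 1 - w" using welch by (simp add: algebra_simps)
    finally show ?thesis using wl by simp
  qed
  have ccf: "v m a * v m b = (1-w) * cc a b m + w * \<delta> a b" for a b m
    unfolding cc_def using wl by simp
  have gap: "0 \<le> nF a b - q a b" "nF a b - q a b = (\<Sum>c<r. \<Sum>d<r. (P a b c d - F a b c d)^2)"
    if ab: "a<r" "b<r" for a b
  proof -
    have PP: "(\<Sum>c<r. \<Sum>d<r. (P a b c d)^2) = q a b"
    proof -
      have "(\<Sum>c<r. \<Sum>d<r. (P a b c d)^2) = w * (\<delta> a b)^2 + (1-w) * (\<Sum>m<N. (cc a b m)^2)"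
        unfolding P_def PPlem sumcc[OF ab] ..
      also have "\<dots> = q a b"
      proof -
        have "q a b = (\<Sum>m<N. (1-w) * (cc a b m)^2 + w * \<delta> a b * cc a b m)"
          unfolding q_def ccf by (intro sum.cong refl) (simp add: algebra_simps power2_eq_square)
        also have "\<dots> = (1-w) * (\<Sum>m<N. (cc a b m)^2) + w * \<delta> a b * (\<Sum>m<N. cc a b m)"
          by (simp add: sum.distrib sum_distrib_left)
        finally show ?thesis using sumcc[OF ab] by (simp add: \<delta>_def)
      qed
      finally show ?thesis .
    qed
    have PF: "(\<Sum>c<r. \<Sum>d<r. P a b c d * F a b c d) = q a b"
    proof -
      have "(\<Sum>c<r. \<Sum>d<r. P a b c d * F a b c d) = (P a b a b + P a b b a) / 2"
        unfolding F_def by (rule Fsum[OF ab])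
      then show ?thesis unfolding P_def q_def by (simp add: mult_ac)
    qed
    have FF: "(\<Sum>c<r. \<Sum>d<r. (F a b c d)^2) = nF a b"
    proof -
      have "(\<Sum>c<r. \<Sum>d<r. (F a b c d)^2) = (F a b a b + F a b b a) / 2"
        unfolding power2_eq_square F_def by (rule Fsum[OF ab])
      then show ?thesis unfolding F_def nF_def by auto
    qed
    have "(\<Sum>c<r. \<Sum>d<r. (P a b c d - F a b c d)^2) = (\<Sum>c<r. \<Sum>d<r. (P a b c d)^2) - 2 * (\<Sum>c<r. \<Sum>d<r. P a b c d * F a b c d) + (\<Sum>c<r. \<Sum>d<r. (F a b c d)^2)"
      by (simp add: power2_diff sum.distrib sum_subtractf sum_distrib_left mult.assoc)
    then show "nF a b - q a b = (\<Sum>c<r. \<Sum>d<r. (P a b c d - F a b c d)^2)" using PP PF FF by simp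
    then show "0 \<le> nF a b - q a b" by (simp add: sum_nonneg)
  qed
  have sumq: "(\<Sum>a<r. \<Sum>b<r. q a b) = N"
  proof -
    have e: "cc a b m * (v m a * v m b) = ((v m a)^2 * (v m b)^2 - w * (if a = b then v m a * v m a else 0)) / (1-w)" for a b m
      unfolding cc_def \<delta>_def by (simp add: power2_eq_square algebra_simps)
    have s1: "(\<Sum>a<r. \<Sum>b<r. \<Sum>m<N. (v m a)^2 * (v m b)^2) = N"
    proof -
      have "(\<Sum>a<r. \<Sum>b<r. \<Sum>m<N. (v m a)^2 * (v m b)^2) = (\<Sum>a<r. \<Sum>m<N. \<Sum>b<r. (v m a)^2 * (v m b)^2)"
        by (rule sum.cong[OF refl], rule sum.swap)
      also have "\<dots> = (\<Sum>m<N. \<Sum>a<r. \<Sum>b<r. (v m a)^2 * (v m b)^2)" by (rule sum.swap)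
      also have "\<dots> = (\<Sum>m<N. (\<Sum>a<r. (v m a)^2) * (\<Sum>b<r. (v m b)^2))" by (simp add: sum_product)
      also have "\<dots> = N" by (simp add: nrm)
      finally show ?thesis .
    qed
    have s2: "(\<Sum>a<r. \<Sum>b<r. \<Sum>m<N. (if a = b then v m a * v m a else 0)) = N"
    proof -
      have "(\<Sum>a<r. \<Sum>b<r. \<Sum>m<N. (if a = b then v m a * v m a else 0)) = (\<Sum>a<r. \<Sum>m<N. v m a * v m a)"
      proof (rule sum.cong[OF refl])
        fix a assume "a \<in> {..<r}"
        have "(\<Sum>b<r. \<Sum>m<N. (if a = b then v m a * v m a else 0)) = (\<Sum>b<r. if a = b then (\<Sum>m<N. v m a * v m a) else 0)"
          by (rule sum.cong[OF refl]) auto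
        then show "(\<Sum>b<r. \<Sum>m<N. (if a = b then v m a * v m a else 0)) = (\<Sum>m<N. v m a * v m a)"
          using \<open>a \<in> {..<r}\<close> by simp
      qed
      also have "\<dots> = (\<Sum>a<r. real N / real r)" by (intro sum.cong refl) (simp add: tight)
      also have "\<dots> = N" using r2 by simp
      finally show ?thesis .
    qed
    have "(\<Sum>a<r. \<Sum>b<r. q a b) = ((\<Sum>a<r. \<Sum>b<r. \<Sum>m<N. (v m a)^2 * (v m b)^2) - w * (\<Sum>a<r. \<Sum>b<r. \<Sum>m<N. (if a = b then v m a * v m a else 0))) / (1-w)"
      unfolding q_def e by (simp add: sum_divide_distrib[symmetric] sum_subtractf sum_distrib_left)
    also have "\<dots> = N" unfolding s1 s2 using wl by (simp add: field_simps)
    finally show ?thesis .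
  qed
  have sumnF: "(\<Sum>a<r. \<Sum>b<r. nF a b) = real r * (real r + 1) / 2"
  proof -
    have "nF a b = 1/2 + (if a = b then 1/2 else 0)" for a b unfolding nF_def by simp
    then have "(\<Sum>a<r. \<Sum>b<r. nF a b) = (\<Sum>a<r. real r / 2 + 1/2)"
      by (simp add: sum.distrib)
    also have "\<dots> = real r * (real r + 1) / 2" by (simp add: field_simps)
    finally show ?thesis .
  qed
  have tot: "real r * (real r + 1) / 2 - N = (\<Sum>a<r. \<Sum>b<r. nF a b - q a b)"
    using sumq sumnF by (simp add: sum_subtractf)
  show "real N \<le> real r * (real r + 1) / 2"
    using tot gap by (smt (verit) sum_nonneg lessThan_iff)
  assume eqN: "real N = real r * (real r + 1) / 2"
    and Ssym: "\<And>a b. S a b = S b a" and Sv: "\<And>m. m < N \<Longrightarrow> (\<Sum>c<r. \<Sum>d<r. S c d * v m c * v m d) = 0"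
    and ab: "a < r" "b < r"
  have z: "(\<Sum>a<r. \<Sum>b<r. nF a b - q a b) = 0" using tot eqN by simp
  have z2: "\<forall>a\<in>{..<r}. \<forall>b\<in>{..<r}. nF a b - q a b = 0"
  proof -
    have g0: "\<And>a. a\<in>{..<r} \<Longrightarrow> 0 \<le> (\<Sum>b<r. nF a b - q a b)"
      using gap(1) by (auto intro!: sum_nonneg)
    have "\<forall>a\<in>{..<r}. (\<Sum>b<r. nF a b - q a b) = 0"
      using z sum_nonneg_eq_0_iff[of "{..<r}" "\<lambda>a. \<Sum>b<r. nF a b - q a b"] g0 by auto
    then show ?thesis
    proof (intro ballI)
      fix a b assume h: "\<forall>a\<in>{..<r}. (\<Sum>b<r. nF a b - q a b) = 0" and a: "a \<in> {..<r}" and b: "b \<in> {..<r}"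
      have "\<And>b. b\<in>{..<r} \<Longrightarrow> 0 \<le> nF a b - q a b" using gap(1) a by auto
      then show "nF a b - q a b = 0"
        using h a b sum_nonneg_eq_0_iff[of "{..<r}" "\<lambda>b. nF a b - q a b"] by auto
    qed
  qed
  have PF: "P a b c d = F a b c d" if "c<r" "d<r" for c d
  proof -
    have "(\<Sum>c<r. \<Sum>d<r. (P a b c d - F a b c d)^2) = 0" using z2 gap(2)[OF ab] ab by simp
    then have "\<forall>c\<in>{..<r}. (\<Sum>d<r. (P a b c d - F a b c d)^2) = 0"
      by (subst (asm) sum_nonneg_eq_0_iff) (auto intro!: sum_nonneg)
    then have "(P a b c d - F a b c d)^2 = 0" using that
      by (subst (asm) sum_nonneg_eq_0_iff) auto
    then show ?thesis by simp
  qed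
  have "S a b = (S a b + S b a) / 2" using Ssym[of a b] by simp
  also have "\<dots> = (\<Sum>c<r. \<Sum>d<r. S c d * F a b c d)" unfolding F_def by (rule Fsum[OF ab, symmetric])
  also have "\<dots> = (\<Sum>c<r. \<Sum>d<r. S c d * P a b c d)" by (intro sum.cong refl) (simp add: PF)
  also have "\<dots> = (\<Sum>m<N. cc a b m * (\<Sum>c<r. \<Sum>d<r. S c d * v m c * v m d))"
    unfolding P_def by (simp add: sum_distrib_left sum.swap[where B="{..<N}"] mult_ac)
  also have "\<dots> = 0" using Sv by simp
  finally show "S a b = 0" .
qed

end

lemma psd_zero:
  fixes M :: "'i \<Rightarrow> 'i \<Rightarrow> real"
  assumes fin: "finite I" and psd: "psd_on I M" and z0: "(\<Sum>p\<in>I. \<Sum>q\<in>I. z p * M p q * z q) = 0"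
    and p0: "p0 \<in> I"
  shows "(\<Sum>q\<in>I. M p0 q * z q) = 0"
proof -
  have sym: "\<And>p q. p \<in> I \<Longrightarrow> q \<in> I \<Longrightarrow> M p q = M q p" and qf: "\<And>z. 0 \<le> (\<Sum>p\<in>I. \<Sum>q\<in>I. z p * M p q * z q)"
    using psd unfolding psd_on_def by auto
  define g where "g = (\<Sum>q\<in>I. M p0 q * z q)"
  define m where "m = M p0 p0"
  define e where "e = (\<lambda>p. if p = p0 then 1 else (0::real))"
  have eL: "(\<Sum>p\<in>I. e p * f p) = f p0" for f :: "'i \<Rightarrow> real"
  proof -
    have "(\<Sum>p\<in>I. e p * f p) = (\<Sum>p\<in>I. if p = p0 then f p else 0)" by (rule sum.cong) (auto simp: e_def)
    then show ?thesis using p0 fin by simp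
  qed
  have eR: "(\<Sum>p\<in>I. f p * e p) = f p0" for f :: "'i \<Rightarrow> real"
    using eL[of f] by (simp add: mult.commute)
  have expand: "(\<Sum>p\<in>I. \<Sum>q\<in>I. (z p + s * e p) * M p q * (z q + s * e q)) = 2 * s * g + s^2 * m" for s
  proof -
    have "(\<Sum>p\<in>I. \<Sum>q\<in>I. (z p + s * e p) * M p q * (z q + s * e q))
      = (\<Sum>p\<in>I. \<Sum>q\<in>I. z p * M p q * z q) + s * (\<Sum>p\<in>I. \<Sum>q\<in>I. e p * M p q * z q)
        + s * (\<Sum>p\<in>I. \<Sum>q\<in>I. z p * M p q * e q) + s^2 * (\<Sum>p\<in>I. \<Sum>q\<in>I. e p * M p q * e q)"
      by (simp add: algebra_simps sum.distrib sum_distrib_left power2_eq_square)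
    also have "(\<Sum>p\<in>I. \<Sum>q\<in>I. e p * M p q * z q) = g"
      unfolding g_def mult.assoc sum_distrib_left[symmetric] by (rule eL)
    also have "(\<Sum>p\<in>I. \<Sum>q\<in>I. z p * M p q * e q) = g"
    proof -
      have "(\<Sum>p\<in>I. \<Sum>q\<in>I. z p * M p q * e q) = (\<Sum>p\<in>I. z p * M p p0)"
        by (intro sum.cong refl) (rule eR)
      also have "\<dots> = g" unfolding g_def using sym p0 by (intro sum.cong refl) (simp add: mult.commute)
      finally show ?thesis .
    qed
    also have "(\<Sum>p\<in>I. \<Sum>q\<in>I. e p * M p q * e q) = m"
    proof -
      have "(\<Sum>p\<in>I. \<Sum>q\<in>I. e p * M p q * e q) = (\<Sum>p\<in>I. e p * M p p0)"
        by (intro sum.cong refl) (rule eR)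
      then show ?thesis unfolding m_def using eL by simp
    qed
    finally show ?thesis using z0 by simp
  qed
  have m0: "0 \<le> m"
  proof -
    have "(\<Sum>p\<in>I. \<Sum>q\<in>I. e p * M p q * e q) = m"
    proof -
      have "(\<Sum>p\<in>I. \<Sum>q\<in>I. e p * M p q * e q) = (\<Sum>p\<in>I. e p * M p p0)"
        by (intro sum.cong refl) (rule eR)
      then show ?thesis unfolding m_def using eL by simp
    qed
    then show ?thesis using qf[of e] by simp
  qed
  define s where "s = - g / (m+1)"
  have hs: "s * (m+1) = - g" unfolding s_def using m0 by simp
  have "0 \<le> 2 * s * g + s^2 * m"
    using qf[of "\<lambda>p. z p + s * e p"] expand[of s] by simp
  then have "0 \<le> (2 * s * g + s^2 * m) * (m+1)^2"
    using m0 by simp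
  also have "(2 * s * g + s^2 * m) * (m+1)^2 = 2 * (s * (m+1)) * g * (m+1) + (s * (m+1))^2 * m"
    by (simp add: power2_eq_square algebra_simps)
  also have "\<dots> = - (g^2 * (m + 2))" unfolding hs by (simp add: power2_eq_square algebra_simps)
  finally have h: "g^2 * (m+2) \<le> 0" by linarith
  have "0 \<le> g^2 * (m+2)" using m0 by (intro mult_nonneg_nonneg) auto
  then have "g^2 * (m+2) = 0" using h by linarith
  then have "g = 0" using m0 by simp
  then show ?thesis unfolding g_def by simp
qed


context etf begin

definition "zk j k = (if k = j then 1 else 0) - real r / real N * X k j"

lemma zk_apply: assumes "j < N"
  shows "(\<Sum>k<N. f k * zk j k) = f j - real r / real N * (\<Sum>k<N. f k * X k j)"
proof -
  have e: "f k * zk j k = (if k = j then f k else 0) - real r / real N * (f k * X k j)" for k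
    unfolding zk_def by (simp add: algebra_simps)
  have "(\<Sum>k<N. f k * zk j k) = (\<Sum>k<N. (if k = j then f k else 0)) - (\<Sum>k<N. real r / real N * (f k * X k j))"
    unfolding e by (simp add: sum_subtractf)
  then show ?thesis using assms by (simp add: sum_distrib_left)
qed

lemma Xzk: assumes "j < N" shows "(\<Sum>k<N. X i k * zk j k) = 0"
  using zk_apply[OF assms, of "X i"] X2[of i j] N1 r1 by simp

lemma zXz: assumes "j < N" shows "(\<Sum>i<N. \<Sum>k<N. zk j i * X i k * zk j k) = 0"
  using Xzk[OF assms] by (simp add: mult.assoc sum_distrib_left[symmetric])

lemma pert_props: assumes A: "A \<in> pert_E2 N X"
  shows "\<And>i j. i<N \<Longrightarrow> j<N \<Longrightarrow> A i j = A j i"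
    and "\<And>i. i<N \<Longrightarrow> A i i = 0"
    and "\<And>i j. i<N \<Longrightarrow> j<N \<Longrightarrow> A i j = real r / real N * (\<Sum>k<N. A i k * X k j)"
proof -
  from A obtain \<epsilon> where sym: "sym_on N A" and e: "\<epsilon> > 0"
    and E: "\<And>t. 0 < t \<Longrightarrow> t < \<epsilon> \<Longrightarrow> E2 N (\<lambda>i j. X i j + t * A i j) \<and> E2 N (\<lambda>i j. X i j - t * A i j)"
    unfolding pert_E2_def by blast
  define t where "t = \<epsilon> / 2"
  have t: "0 < t" "t < \<epsilon>" using e unfolding t_def by auto
  have Ep: "E2 N (\<lambda>i j. X i j + t * A i j)" and Em: "E2 N (\<lambda>i j. X i j - t * A i j)" using E[OF t] by auto
  show "\<And>i j. i<N \<Longrightarrow> j<N \<Longrightarrow> A i j = A j i" using sym unfolding sym_on_def by auto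
  show "\<And>i. i<N \<Longrightarrow> A i i = 0" using Ep Xdiag t unfolding E2_def by auto
  fix i j assume ij: "i<N" "j<N"
  define z where "z = zk j"
  have psdp: "psd_on {..<N} (\<lambda>i j. X i j + t * A i j)" and psdm: "psd_on {..<N} (\<lambda>i j. X i j - t * A i j)"
    using Ep Em unfolding E2_def by auto
  have qp: "(\<Sum>a<N. \<Sum>b<N. z a * (X a b + t * A a b) * z b) = t * (\<Sum>a<N. \<Sum>b<N. z a * A a b * z b)"
    using zXz[OF ij(2)] unfolding z_def by (simp add: algebra_simps sum.distrib sum_distrib_left)
  have qm: "(\<Sum>a<N. \<Sum>b<N. z a * (X a b - t * A a b) * z b) = - t * (\<Sum>a<N. \<Sum>b<N. z a * A a b * z b)"
    using zXz[OF ij(2)] unfolding z_def by (simp add: algebra_simps sum.distrib sum_subtractf sum_distrib_left sum_negf)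
  have "0 \<le> (\<Sum>a<N. \<Sum>b<N. z a * (X a b + t * A a b) * z b)" using psdp unfolding psd_on_def by blast
  then have h1: "0 \<le> t * (\<Sum>a<N. \<Sum>b<N. z a * A a b * z b)" using qp by simp
  have "0 \<le> (\<Sum>a<N. \<Sum>b<N. z a * (X a b - t * A a b) * z b)" using psdm unfolding psd_on_def by blast
  then have h2: "0 \<le> - t * (\<Sum>a<N. \<Sum>b<N. z a * A a b * z b)" using qm by simp
  from h1 h2 have "(\<Sum>a<N. \<Sum>b<N. z a * A a b * z b) = 0" using t by (simp add: zero_le_mult_iff mult_le_0_iff)
  then have "(\<Sum>a<N. \<Sum>b<N. z a * (X a b + t * A a b) * z b) = 0" using qp by simp
  from psd_zero[OF _ psdp this, of i] ij
  have "(\<Sum>k<N. (X i k + t * A i k) * z k) = 0" by simp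
  then have "(\<Sum>k<N. X i k * z k) + t * (\<Sum>k<N. A i k * z k) = 0"
    by (simp add: algebra_simps sum.distrib sum_distrib_left)
  then have "(\<Sum>k<N. A i k * z k) = 0" using Xzk[OF ij(2)] t unfolding z_def by simp
  then show "A i j = real r / real N * (\<Sum>k<N. A i k * X k j)"
    unfolding z_def using zk_apply[OF ij(2), of "A i"] by simp
qed

end

context etf begin

lemma XDX_S:
  fixes D :: "nat \<Rightarrow> nat \<Rightarrow> real"
  shows "(\<Sum>q<N. \<Sum>p<N. X k q * D q p * X p j) = (\<Sum>a<r. \<Sum>b<r. v k a * v j b * (\<Sum>q<N. \<Sum>p<N. v q a * D q p * v p b))"
proof -
  have "(\<Sum>q<N. \<Sum>p<N. X k q * D q p * X p j) = (\<Sum>q<N. \<Sum>p<N. \<Sum>a<r. \<Sum>b<r. v k a * v j b * (v q a * D q p * v p b))"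
    unfolding Xdef by (simp add: sum_distrib_left sum_distrib_right mult_ac)
  also have "\<dots> = (\<Sum>a<r. \<Sum>b<r. \<Sum>q<N. \<Sum>p<N. v k a * v j b * (v q a * D q p * v p b))"
    by (rule swap4)
  also have "\<dots> = (\<Sum>a<r. \<Sum>b<r. v k a * v j b * (\<Sum>q<N. \<Sum>p<N. v q a * D q p * v p b))"
    by (simp add: sum_distrib_left)
  finally show ?thesis .
qed

lemma only_if:
  assumes r2: "r \<ge> 2" and eqN: "real N = real r * (real r + 1) / 2"
    and pm: "pseudomoment4 N Y" and ext: "extends4 N Y X"
  shows False
proof -
  have wl: "w < 1" and N2: "N \<ge> 2" using r2_w r2 by auto
  note pmd = pm[unfolded pseudomoment4_def]
  have psd: "psd_on (pairs N) Y" using pmd by (rule conjunct1)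
  have c2: "\<And>i j k k'. i<N \<Longrightarrow> j<N \<Longrightarrow> k<N \<Longrightarrow> k'<N \<Longrightarrow> Y (i,j) (k,k) = Y (i,j) (k',k')"
    using pmd[THEN conjunct2, THEN conjunct1] by blast
  have c4: "\<And>(g::nat\<Rightarrow>nat) (\<sigma>::nat\<Rightarrow>nat). (\<forall>m<4. g m < N) \<Longrightarrow> \<sigma> permutes {..<4} \<Longrightarrow>
        Y (g 0, g 1) (g 2, g 3) = Y (g (\<sigma> 0), g (\<sigma> 1)) (g (\<sigma> 2), g (\<sigma> 3))"
    using pmd[THEN conjunct2, THEN conjunct2, THEN conjunct2] by blast
  have ext': "\<And>i j. i<N \<Longrightarrow> j<N \<Longrightarrow> Y (0,i) (0,j) = X i j" using ext unfolding extends4_def by blast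
  define gg where "gg = (\<lambda>a b c d m::nat. (if m = 0 then a else if m = 1 then b else if m = 2 then c else d) :: nat)"
  have ggN: "a<N \<Longrightarrow> b<N \<Longrightarrow> c<N \<Longrightarrow> d<N \<Longrightarrow> \<forall>m<4. gg a b c d m < N" for a b c d
    unfolding gg_def by auto
  have P1: "Y (a,b) (c,d) = Y (c,a) (d,b)" if "a<N" "b<N" "c<N" "d<N" for a b c d
  proof -
    define \<sigma> where "\<sigma> = Transposition.transpose (0::nat) 1 \<circ> Transposition.transpose 0 2 \<circ> Transposition.transpose 2 3"
    have "\<sigma> permutes {..<4}" unfolding \<sigma>_def
      by (intro permutes_compose permutes_swap_id) auto
    from c4[OF ggN[OF that] this] show ?thesis
      unfolding \<sigma>_def gg_def by (simp add: transpose_def)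
  qed
  have P2: "Y (a,b) (c,d) = Y (a,b) (d,c)" if "a<N" "b<N" "c<N" "d<N" for a b c d
  proof -
    have "Transposition.transpose (2::nat) 3 permutes {..<4}" by (intro permutes_swap_id) auto
    from c4[OF ggN[OF that] this] show ?thesis
      unfolding gg_def by (simp add: transpose_def)
  qed
  have Y1: "Y (i,j) (k,k) = X i j" if "i<N" "j<N" "k<N" for i j k
  proof -
    have "Y (i,j) (k,k) = Y (i,j) (0,0)" using c2[of i j k 0] that N1 by simp
    also have "\<dots> = Y (0,i) (0,j)" using P1[of i j 0 0] that N1 by auto
    also have "\<dots> = X i j" using ext' that by auto
    finally show ?thesis .
  qed
  have Y2: "Y (k,i) (k,j) = X i j" if "i<N" "j<N" "k<N" for i j k
    using P1[of i j k k] Y1[of i j k] that by auto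
  have Dzero: "Y (s,t) (k,j) = X s t * X k j" if st: "s<N" "t<N" and kj: "k<N" "j<N" for s t k j
  proof -
    define Dm where "Dm = (\<lambda>k j. Y (s,t) (k,j) - X s t * X k j)"
    have Yz: "(\<Sum>q<N. Y (s,t) (k,q) * zk j q) = 0" if "k<N" "j<N" for k j
    proof -
      define e where "e = (\<lambda>p::nat\<times>nat. if fst p = k then zk j (snd p) else 0)"
      have "(\<Sum>p\<in>pairs N. \<Sum>q\<in>pairs N. e p * Y p q * e q) = (\<Sum>a<N. \<Sum>b<N. zk j a * Y (k,a) (k,b) * zk j b)"
      proof -
        have "(\<Sum>p\<in>pairs N. \<Sum>q\<in>pairs N. e p * Y p q * e q)
           = (\<Sum>p1<N. \<Sum>p2<N. \<Sum>q1<N. \<Sum>q2<N. e (p1,p2) * Y (p1,p2) (q1,q2) * e (q1,q2))"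
          by (simp add: pairs_sum)
        also have "\<dots> = (\<Sum>p1<N. if p1 = k then (\<Sum>p2<N. \<Sum>q1<N. \<Sum>q2<N. zk j p2 * Y (p1,p2) (q1,q2) * e (q1,q2)) else 0)"
          by (intro sum.cong refl) (simp add: e_def)
        also have "\<dots> = (\<Sum>p2<N. \<Sum>q1<N. \<Sum>q2<N. zk j p2 * Y (k,p2) (q1,q2) * e (q1,q2))"
          using that by simp
        also have "\<dots> = (\<Sum>p2<N. \<Sum>q1<N. if q1 = k then (\<Sum>q2<N. zk j p2 * Y (k,p2) (q1,q2) * zk j q2) else 0)"
          by (intro sum.cong refl) (simp add: e_def)
        also have "\<dots> = (\<Sum>a<N. \<Sum>b<N. zk j a * Y (k,a) (k,b) * zk j b)"
          using that by simp
        finally show ?thesis .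
      qed
      also have "\<dots> = (\<Sum>a<N. \<Sum>b<N. zk j a * X a b * zk j b)"
        by (intro sum.cong refl) (simp add: Y2 that)
      also have "\<dots> = 0" using zXz[OF that(2)] .
      finally have q0: "(\<Sum>p\<in>pairs N. \<Sum>q\<in>pairs N. e p * Y p q * e q) = 0" .
      have "(s,t) \<in> pairs N" using st unfolding pairs_def by auto
      from psd_zero[OF _ psd q0 this] have "(\<Sum>q\<in>pairs N. Y (s,t) q * e q) = 0"
        unfolding pairs_def by simp
      then have "(\<Sum>q1<N. \<Sum>q2<N. Y (s,t) (q1,q2) * e (q1,q2)) = 0" by (simp add: pairs_sum)
      moreover have "(\<Sum>q1<N. \<Sum>q2<N. Y (s,t) (q1,q2) * e (q1,q2)) = (\<Sum>q1<N. if q1 = k then (\<Sum>q2<N. Y (s,t) (q1,q2) * zk j q2) else 0)"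
        by (intro sum.cong refl) (simp add: e_def)
      ultimately show ?thesis using that by simp
    qed
    have Dr: "Dm k j = real r / real N * (\<Sum>q<N. Dm k q * X q j)" if "k<N" "j<N" for k j
    proof -
      have "Y (s,t) (k,j) = real r / real N * (\<Sum>q<N. Y (s,t) (k,q) * X q j)"
        using Yz[OF that] zk_apply[OF that(2), of "\<lambda>q. Y (s,t) (k,q)"] by simp
      moreover have "X k j = real r / real N * (\<Sum>q<N. X k q * X q j)"
        using X2[of k j] N1 r1 by simp
      ultimately show ?thesis unfolding Dm_def
        by (simp add: algebra_simps sum_subtractf sum_distrib_left)
    qed
    have Dsym: "Dm k j = Dm j k" if "k<N" "j<N" for k j
      unfolding Dm_def using P2[of s t k j] st that Xsym[of k j] by simp
    have Ddiag: "Dm k k = 0" if "k<N" for k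
      unfolding Dm_def using Y1[of s t k] st that Xdiag by simp
    have Dl: "(\<Sum>q<N. X k q * Dm q j) = real N / real r * Dm k j" if "k<N" "j<N" for k j
    proof -
      have "(\<Sum>q<N. X k q * Dm q j) = (\<Sum>q<N. Dm j q * X q k)"
        by (intro sum.cong refl) (simp add: Dsym that Xsym[of k])
      also have "\<dots> = real N / real r * Dm j k" using Dr[of j k] that N1 r1 by simp
      finally show ?thesis using Dsym[OF that] by simp
    qed
    have XDX: "(\<Sum>q<N. \<Sum>p<N. X k q * Dm q p * X p j) = (real N / real r)^2 * Dm k j" if "k<N" "j<N" for k j
    proof -
      have "(\<Sum>q<N. \<Sum>p<N. X k q * Dm q p * X p j) = (\<Sum>q<N. X k q * (\<Sum>p<N. Dm q p * X p j))"
        by (simp add: sum_distrib_left mult.assoc)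
      also have "\<dots> = (\<Sum>q<N. X k q * (real N / real r * Dm q j))"
        using that N1 r1 by (intro sum.cong refl) (simp add: Dr[of _ j])
      also have "\<dots> = real N / real r * (\<Sum>q<N. X k q * Dm q j)"
        by (simp add: sum_distrib_left mult_ac)
      finally show ?thesis using Dl[OF that] by (simp add: power2_eq_square)
    qed
    define S where "S = (\<lambda>a b. \<Sum>q<N. \<Sum>p<N. v q a * Dm q p * v p b)"
    have Ssym: "S a b = S b a" for a b
    proof -
      have "S a b = (\<Sum>p<N. \<Sum>q<N. v q a * Dm q p * v p b)" unfolding S_def by (rule sum.swap)
      also have "\<dots> = S b a" unfolding S_def
        by (intro sum.cong refl) (simp add: Dsym mult_ac)
      finally show ?thesis .
    qed
    have Sv: "(\<Sum>c<r. \<Sum>d<r. S c d * v m c * v m d) = 0" if "m<N" for m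
    proof -
      have "(\<Sum>c<r. \<Sum>d<r. S c d * v m c * v m d) = (\<Sum>q<N. \<Sum>p<N. X m q * Dm q p * X p m)"
        unfolding XDX_S S_def by (simp add: mult_ac)
      also have "\<dots> = 0" using XDX[OF that that] Ddiag[OF that] by simp
      finally show ?thesis .
    qed
    have S0: "S a b = 0" if "a<r" "b<r" for a b
      using gerzon(2)[OF r2 eqN, of S] Ssym Sv that by blast
    have "(real N / real r)^2 * Dm k j = 0"
    proof -
      have "(real N / real r)^2 * Dm k j = (\<Sum>a<r. \<Sum>b<r. v k a * v j b * S a b)"
        unfolding XDX[OF kj, symmetric] XDX_S S_def ..
      also have "\<dots> = 0" by (simp add: S0)
      finally show ?thesis .
    qed
    then have "Dm k j = 0" using N1 r1 by simp
    then show ?thesis unfolding Dm_def by simp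
  qed
  have "Y (0,1) (0,1) = X 0 1 * X 0 1" using Dzero[of 0 1 0 1] N2 by simp
  moreover have "Y (0,1) (0,1) = 1" using ext' N2 Xdiag by simp
  moreover have "(X 0 1)^2 = w" using weq[of 0 1] N2 by simp
  ultimately show False using wl by (simp add: power2_eq_square)
qed

end

lemma orth_unique:
  assumes P1: "orth_proj N S P1" and P2: "orth_proj N S P2" and p: "p \<in> pairs N" and q0: "q0 \<in> pairs N"
  shows "P1 p q0 = P2 p q0"
proof -
  define w where "w = (\<lambda>q. if q = q0 then 1 else (0::real))"
  define u1 where "u1 = (\<lambda>p. \<Sum>q\<in>pairs N. P1 p q * w q)"
  define u2 where "u2 = (\<lambda>p. \<Sum>q\<in>pairs N. P2 p q * w q)"
  have fin: "finite (pairs N)" unfolding pairs_def by simp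
  have u1S: "u1 \<in> S" and o1: "\<And>s. s \<in> S \<Longrightarrow> (\<Sum>p\<in>pairs N. (w p - u1 p) * s p) = 0"
    using P1 unfolding orth_proj_def u1_def Let_def by blast+
  have u2S: "u2 \<in> S" and o2: "\<And>s. s \<in> S \<Longrightarrow> (\<Sum>p\<in>pairs N. (w p - u2 p) * s p) = 0"
    using P2 unfolding orth_proj_def u2_def Let_def by blast+
  have "(\<Sum>p\<in>pairs N. (u1 p - u2 p)^2) =
      ((\<Sum>p\<in>pairs N. (w p - u2 p) * u1 p) - (\<Sum>p\<in>pairs N. (w p - u2 p) * u2 p))
      - ((\<Sum>p\<in>pairs N. (w p - u1 p) * u1 p) - (\<Sum>p\<in>pairs N. (w p - u1 p) * u2 p))"
    by (simp add: sum_subtractf[symmetric] power2_eq_square algebra_simps)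
  also have "\<dots> = 0" using o1[OF u1S] o1[OF u2S] o2[OF u1S] o2[OF u2S] by simp
  finally have "(\<Sum>p\<in>pairs N. (u1 p - u2 p)^2) = 0" .
  then have "(u1 p - u2 p)^2 = 0" using fin p by (subst (asm) sum_nonneg_eq_0_iff) auto
  moreover have "u1 p = P1 p q0" "u2 p = P2 p q0"
    unfolding u1_def u2_def w_def using fin q0 by (simp_all add: if_distrib cong: if_cong)
  ultimately show ?thesis by simp
qed


context etf2 begin

definition "Kc = real N ^ 2 * (1 - 1 / real r) / c"

lemma Kc_pos: "Kc > 0"
  unfolding Kc_def using cpos r2 N1 by (intro divide_pos_pos mult_pos_pos) (auto simp: field_simps)

lemma Kc_eq: "2 * Aco * (real N / real r)^2 = Kc"
  unfolding Kc_def Aco_def using r2 cpos by (simp add: field_simps power2_eq_square)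

lemma YF_sw: "YF k l i j = YF i j k l"
proof -
  have "YF k l i j = YF k i l j" using YF_s12[of k i l j] by simp
  also have "\<dots> = YF i k l j" using YF_s01[of i k l j] by simp
  also have "\<dots> = YF i k j l" using YF_s23[of i k j l] by simp
  also have "\<dots> = YF i j k l" using YF_s12[of i j k l] by simp
  finally show ?thesis .
qed

lemma QA:
  assumes A: "A \<in> pert_E2 N X" and ij: "i < N" "j < N"
  shows "(\<Sum>k<N. \<Sum>l<N. YF i j k l * A k l) = Kc * A i j"
    and "(\<Sum>k<N. \<Sum>l<N. X k l * A k l) = 0"
proof -
  note Asym = pert_props(1)[OF A] and Adiag = pert_props(2)[OF A] and Ar = pert_props(3)[OF A]
  have Nr: "real N / real r \<noteq> 0" using N1 r1 by simp
  have Ar': "(\<Sum>k<N. A i k * X k j) = real N / real r * A i j" if "i<N" "j<N" for i j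
    using Ar[OF that] Nr by (simp add: field_simps)
  have Al: "(\<Sum>k<N. X i k * A k j) = real N / real r * A i j" if "i<N" "j<N" for i j
  proof -
    have "(\<Sum>k<N. X i k * A k j) = (\<Sum>k<N. A j k * X k i)"
      using that by (intro sum.cong refl) (simp add: Asym Xsym[of i])
    then show ?thesis using Ar'[of j i] that Asym by simp
  qed
  have XAX: "(\<Sum>k<N. \<Sum>l<N. X i k * A k l * X l j) = (real N / real r)^2 * A i j" if "i<N" "j<N" for i j
  proof -
    have "(\<Sum>k<N. \<Sum>l<N. X i k * A k l * X l j) = (\<Sum>k<N. X i k * (\<Sum>l<N. A k l * X l j))"
      by (simp add: sum_distrib_left mult.assoc)
    also have "\<dots> = (\<Sum>k<N. X i k * (real N / real r * A k j))"
      using that by (intro sum.cong refl) (simp add: Ar')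
    also have "\<dots> = real N / real r * (\<Sum>k<N. X i k * A k j)"
      by (simp add: sum_distrib_left mult_ac)
    finally show ?thesis using Al[OF that] by (simp add: power2_eq_square)
  qed
  show inner0: "(\<Sum>k<N. \<Sum>l<N. X k l * A k l) = 0"
  proof -
    have "(\<Sum>k<N. \<Sum>l<N. X k l * A k l) = (\<Sum>k<N. \<Sum>l<N. A k l * X l k)"
      by (intro sum.cong refl) (metis Xsym mult.commute)
    also have "\<dots> = (\<Sum>k<N. real N / real r * A k k)"
      by (intro sum.cong refl) (simp add: Ar')
    also have "\<dots> = 0" by (simp add: Adiag)
    finally show ?thesis .
  qed
  have T2: "(\<Sum>k<N. \<Sum>l<N. X i k * X j l * A k l) = (real N / real r)^2 * A i j"
    using XAX[OF ij] by (simp add: Xsym[of j] mult_ac)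
  have T3: "(\<Sum>k<N. \<Sum>l<N. X i l * X j k * A k l) = (real N / real r)^2 * A i j"
  proof -
    have "(\<Sum>k<N. \<Sum>l<N. X i l * X j k * A k l) = (\<Sum>k<N. \<Sum>l<N. X j k * A k l * X l i)"
      by (simp add: Xsym[of i] mult_ac)
    then show ?thesis using XAX[of j i] ij Asym by simp
  qed
  have T4: "(\<Sum>k<N. \<Sum>l<N. (\<Sum>m<N. X i m * X j m * X k m * X l m) * A k l) = 0"
  proof -
    have "(\<Sum>k<N. \<Sum>l<N. (\<Sum>m<N. X i m * X j m * X k m * X l m) * A k l)
        = (\<Sum>k<N. \<Sum>l<N. \<Sum>m<N. X i m * X j m * (X m k * A k l * X l m))"
    proof -
      have "(\<Sum>k<N. \<Sum>l<N. (\<Sum>m<N. X i m * X j m * X k m * X l m) * A k l)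
        = (\<Sum>k<N. \<Sum>l<N. \<Sum>m<N. X i m * X j m * X k m * X l m * A k l)"
        by (simp add: sum_distrib_right)
      also have "\<dots> = (\<Sum>k<N. \<Sum>l<N. \<Sum>m<N. X i m * X j m * (X m k * A k l * X l m))"
      proof -
        have pw: "X i m * X j m * X k m * X l m * A k l = X i m * X j m * (X m k * A k l * X l m)" for k l m
          using Xsym[of m k] by (simp add: mult_ac)
        show ?thesis by (simp only: pw)
      qed
      finally show ?thesis .
    qed
    also have "\<dots> = (\<Sum>k<N. \<Sum>m<N. \<Sum>l<N. X i m * X j m * (X m k * A k l * X l m))"
      by (rule sum.cong[OF refl], rule sum.swap)
    also have "\<dots> = (\<Sum>m<N. \<Sum>k<N. \<Sum>l<N. X i m * X j m * (X m k * A k l * X l m))"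
      by (rule sum.swap)
    also have "\<dots> = (\<Sum>m<N. X i m * X j m * (\<Sum>k<N. \<Sum>l<N. X m k * A k l * X l m))"
      by (simp add: sum_distrib_left)
    also have "\<dots> = 0" by (simp add: XAX Adiag)
    finally show ?thesis .
  qed
  have "(\<Sum>k<N. \<Sum>l<N. YF i j k l * A k l)
     = Aco * (X i j * (\<Sum>k<N. \<Sum>l<N. X k l * A k l) + (\<Sum>k<N. \<Sum>l<N. X i k * X j l * A k l)
         + (\<Sum>k<N. \<Sum>l<N. X i l * X j k * A k l))
       - Bco * (\<Sum>k<N. \<Sum>l<N. (\<Sum>m<N. X i m * X j m * X k m * X l m) * A k l)"
    unfolding YF_def by (simp add: algebra_simps sum.distrib sum_subtractf sum_distrib_left)
  also have "\<dots> = 2 * Aco * (real N / real r)^2 * A i j" unfolding inner0 T2 T3 T4 by simp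
  finally show "(\<Sum>k<N. \<Sum>l<N. YF i j k l * A k l) = Kc * A i j" using Kc_eq by simp
qed

end



context etf2 begin

lemma Xabs: "i<N \<Longrightarrow> j<N \<Longrightarrow> \<bar>X i j\<bar> \<le> 1"
  using Xsq[of i j] w0 w1 abs_square_le_1[of "X i j"] by (auto split: if_splits)

lemma Usum: "(\<Sum>m<N. (\<Sum>i<N. z i * X i m)^2) = real N / real r * (\<Sum>i<N. \<Sum>j<N. z i * X i j * z j)"
proof -
  have "(\<Sum>m<N. (\<Sum>i<N. z i * X i m)^2) = (\<Sum>m<N. \<Sum>i<N. \<Sum>j<N. z i * z j * (X i m * X j m))"
    by (simp add: power2_eq_square sum_product mult_ac)
  also have "\<dots> = (\<Sum>i<N. \<Sum>m<N. \<Sum>j<N. z i * z j * (X i m * X j m))" by (rule sum.swap)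
  also have "\<dots> = (\<Sum>i<N. \<Sum>j<N. \<Sum>m<N. z i * z j * (X i m * X j m))"
    by (rule sum.cong[OF refl], rule sum.swap)
  also have "\<dots> = (\<Sum>i<N. \<Sum>j<N. z i * z j * (real N / real r * X i j))"
    by (simp add: sum_distrib_left[symmetric] X2')
  also have "\<dots> = real N / real r * (\<Sum>i<N. \<Sum>j<N. z i * X i j * z j)"
    by (simp add: sum_distrib_left mult_ac)
  finally show ?thesis .
qed

lemma ZX0: "0 \<le> (\<Sum>i<N. \<Sum>j<N. z i * X i j * z j)"
  unfolding psdX by (simp add: sum_nonneg)

lemma Gkl:
  "(\<Sum>i<N. \<Sum>j<N. z i * z j * YF i j k l)
   = Aco * ((\<Sum>i<N. \<Sum>j<N. z i * X i j * z j) * X k l + 2 * ((\<Sum>i<N. z i * X i k) * (\<Sum>i<N. z i * X i l)))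
     - Bco * (\<Sum>m<N. (\<Sum>i<N. z i * X i m)^2 * (X k m * X l m))"
proof -
  define u where "u = (\<lambda>m. \<Sum>i<N. z i * X i m)"
  have t1: "(\<Sum>i<N. \<Sum>j<N. z i * z j * (X i j * X k l)) = (\<Sum>i<N. \<Sum>j<N. z i * X i j * z j) * X k l"
    by (simp add: sum_distrib_right sum_distrib_left mult_ac)
  have t2: "(\<Sum>i<N. \<Sum>j<N. z i * z j * (X i k * X j l)) = u k * u l"
    unfolding u_def sum_product by (simp add: mult_ac)
  have t3: "(\<Sum>i<N. \<Sum>j<N. z i * z j * (X i l * X j k)) = u l * u k"
    unfolding u_def sum_product by (simp add: mult_ac)
  have t4: "(\<Sum>i<N. \<Sum>j<N. z i * z j * (\<Sum>m<N. X i m * X j m * X k m * X l m)) = (\<Sum>m<N. (u m)^2 * (X k m * X l m))"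
  proof -
    have "(\<Sum>i<N. \<Sum>j<N. z i * z j * (\<Sum>m<N. X i m * X j m * X k m * X l m))
       = (\<Sum>i<N. \<Sum>j<N. \<Sum>m<N. z i * X i m * (z j * X j m) * (X k m * X l m))"
      by (simp add: sum_distrib_left mult_ac)
    also have "\<dots> = (\<Sum>i<N. \<Sum>m<N. \<Sum>j<N. z i * X i m * (z j * X j m) * (X k m * X l m))"
      by (rule sum.cong[OF refl], rule sum.swap)
    also have "\<dots> = (\<Sum>m<N. \<Sum>i<N. \<Sum>j<N. z i * X i m * (z j * X j m) * (X k m * X l m))"
      by (rule sum.swap)
    also have "\<dots> = (\<Sum>m<N. (u m)^2 * (X k m * X l m))"
      unfolding u_def power2_eq_square sum_product by (simp add: sum_distrib_right)
    finally show ?thesis .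
  qed
  have "(\<Sum>i<N. \<Sum>j<N. z i * z j * YF i j k l)
     = Aco * ((\<Sum>i<N. \<Sum>j<N. z i * z j * (X i j * X k l)) + (\<Sum>i<N. \<Sum>j<N. z i * z j * (X i k * X j l))
        + (\<Sum>i<N. \<Sum>j<N. z i * z j * (X i l * X j k)))
       - Bco * (\<Sum>i<N. \<Sum>j<N. z i * z j * (\<Sum>m<N. X i m * X j m * X k m * X l m))"
    unfolding YF_def by (simp add: algebra_simps sum.distrib sum_subtractf sum_distrib_left)
  also have "\<dots> = Aco * ((\<Sum>i<N. \<Sum>j<N. z i * X i j * z j) * X k l + 2 * (u k * u l))
     - Bco * (\<Sum>m<N. (u m)^2 * (X k m * X l m))"
    unfolding t1 t2 t3 t4 by (simp add: algebra_simps)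
  finally show ?thesis unfolding u_def .
qed


lemma Aco_nn: "0 \<le> Aco" and Bco_nn: "0 \<le> Bco"
  unfolding Aco_def Bco_def using cpos r2 N1 by (auto intro!: divide_nonneg_pos mult_nonneg_nonneg simp: field_simps)

lemma tri3: fixes a b d A B :: real assumes "0 \<le> A" "0 \<le> B"
  shows "\<bar>a + 2*A*b - B*d\<bar> \<le> \<bar>a\<bar> + 2*A*\<bar>b\<bar> + B*\<bar>d\<bar>"
proof -
  have "\<bar>2*A*b\<bar> = 2*A*\<bar>b\<bar>" "\<bar>B*d\<bar> = B*\<bar>d\<bar>" using assms by (simp_all add: abs_mult)
  moreover have "\<bar>a + 2*A*b - B*d\<bar> \<le> \<bar>a\<bar> + \<bar>2*A*b\<bar> + \<bar>B*d\<bar>"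
    using abs_triangle_ineq4[of "a + 2*A*b" "B*d"] abs_triangle_ineq[of a "2*A*b"] by linarith
  ultimately show ?thesis by simp
qed

definition "C0 = \<bar>Aco - 1\<bar> + (2 * Aco + Bco) * (real N / real r)"

lemma C0_nn: "0 \<le> C0" unfolding C0_def using Aco_nn Bco_nn by simp

lemma Gbound: assumes kl: "k < N" "l < N"
  shows "\<bar>\<Sum>i<N. \<Sum>j<N. z i * z j * (YF i j k l - X i j * X k l)\<bar> \<le> C0 * (\<Sum>i<N. \<Sum>j<N. z i * X i j * z j)"
proof -
  define ZX where "ZX = (\<Sum>i<N. \<Sum>j<N. z i * X i j * z j)"
  define u where "u = (\<lambda>m. \<Sum>i<N. z i * X i m)"
  define U where "U = (\<Sum>m<N. (u m)^2)"
  have ZX0: "0 \<le> ZX" unfolding ZX_def by (rule ZX0)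
  have UZ: "U = real N / real r * ZX" unfolding U_def u_def ZX_def by (rule Usum)
  have e: "(\<Sum>i<N. \<Sum>j<N. z i * z j * (YF i j k l - X i j * X k l))
     = (Aco - 1) * ZX * X k l + 2 * Aco * (u k * u l) - Bco * (\<Sum>m<N. (u m)^2 * (X k m * X l m))"
  proof -
    have "(\<Sum>i<N. \<Sum>j<N. z i * z j * (YF i j k l - X i j * X k l))
        = (\<Sum>i<N. \<Sum>j<N. z i * z j * YF i j k l) - (\<Sum>i<N. \<Sum>j<N. z i * X i j * z j) * X k l"
      by (simp add: algebra_simps sum_subtractf sum_distrib_right sum_distrib_left)
    then show ?thesis unfolding Gkl ZX_def u_def by (simp add: algebra_simps)
  qed
  have b1: "\<bar>(Aco - 1) * ZX * X k l\<bar> \<le> \<bar>Aco - 1\<bar> * ZX"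
  proof -
    have "\<bar>(Aco - 1) * ZX * X k l\<bar> = \<bar>Aco - 1\<bar> * ZX * \<bar>X k l\<bar>" using ZX0 by (simp add: abs_mult)
    also have "\<dots> \<le> \<bar>Aco - 1\<bar> * ZX * 1" using Xabs[OF kl] ZX0 by (intro mult_left_mono) auto
    finally show ?thesis by simp
  qed
  have uU: "(u m)^2 \<le> U" if "m < N" for m
    unfolding U_def using that by (intro member_le_sum) auto
  have b2: "\<bar>u k * u l\<bar> \<le> U"
  proof -
    have "2 * \<bar>u k * u l\<bar> \<le> (u k)^2 + (u l)^2"
      using sum_squares_bound[of "\<bar>u k\<bar>" "\<bar>u l\<bar>"] by (simp add: abs_mult power2_abs)
    then show ?thesis using uU[OF kl(1)] uU[OF kl(2)] by simp
  qed
  have b3: "\<bar>\<Sum>m<N. (u m)^2 * (X k m * X l m)\<bar> \<le> U"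
  proof -
    have "\<bar>\<Sum>m<N. (u m)^2 * (X k m * X l m)\<bar> \<le> (\<Sum>m<N. \<bar>(u m)^2 * (X k m * X l m)\<bar>)"
      by (rule sum_abs)
    also have "\<dots> \<le> (\<Sum>m<N. (u m)^2)"
    proof (rule sum_mono)
      fix m assume "m \<in> {..<N}"
      then have "\<bar>X k m * X l m\<bar> \<le> 1" using Xabs kl by (simp add: abs_mult mult_le_one)
      then show "\<bar>(u m)^2 * (X k m * X l m)\<bar> \<le> (u m)^2"
        by (simp add: abs_mult mult_left_le)
    qed
    finally show ?thesis unfolding U_def .
  qed
  have "\<bar>(Aco - 1) * ZX * X k l + 2 * Aco * (u k * u l) - Bco * (\<Sum>m<N. (u m)^2 * (X k m * X l m))\<bar>
      \<le> \<bar>(Aco - 1) * ZX * X k l\<bar> + 2 * Aco * \<bar>u k * u l\<bar> + Bco * \<bar>\<Sum>m<N. (u m)^2 * (X k m * X l m)\<bar>"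
    by (rule tri3[OF Aco_nn Bco_nn])
  also have "\<dots> \<le> \<bar>Aco - 1\<bar> * ZX + 2 * Aco * U + Bco * U"
    using b1 b2 b3 Aco_nn Bco_nn by (intro add_mono mult_left_mono) auto
  also have "\<dots> = C0 * ZX" unfolding C0_def UZ by (simp add: algebra_simps)
  finally show ?thesis unfolding e ZX_def .
qed

end

context etf2 begin

definition "Qm = (\<lambda>(i,j) (k,l). (YF i j k l - X i j * X k l) / Kc)"

lemma Qm_apply: "Qm (i,j) (k,l) = (YF i j k l - X i j * X k l) / Kc"
  unfolding Qm_def by simp

lemma Qm_sym: "Qm p q = Qm q p"
  by (cases p; cases q) (simp add: Qm_apply YF_sw mult.commute)

lemma Qw_pert: "(\<lambda>i j. \<Sum>q\<in>pairs N. Qm (i,j) q * ww q) \<in> pert_E2 N X"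
proof -
  define A where "A = (\<lambda>i j. \<Sum>q\<in>pairs N. Qm (i,j) q * ww q)"
  have Aexp: "A i j = (\<Sum>k<N. \<Sum>l<N. (YF i j k l - X i j * X k l) / Kc * ww (k,l))" for i j
    unfolding A_def pairs_sum Qm_apply ..
  have Asym: "A i j = A j i" for i j
    unfolding Aexp by (simp add: YF_s01[of j i] Xsym[of j i])
  have Adiag: "A i i = 0" if "i < N" for i
  proof -
    have "YF i i k l - X i i * X k l = 0" if "k<N" "l<N" for k l
      using YF_sw[of i i k l] YF_kk[OF that \<open>i<N\<close>] Xdiag[OF \<open>i<N\<close>] by simp
    then show ?thesis unfolding Aexp by simp
  qed
  define C where "C = (\<Sum>k<N. \<Sum>l<N. \<bar>ww (k,l)\<bar>) / Kc * C0"
  have C0': "0 \<le> C" unfolding C_def using Kc_pos C0_nn by (auto intro!: mult_nonneg_nonneg divide_nonneg_pos sum_nonneg)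
  have aux: "(\<Sum>k<N. \<Sum>l<N. \<bar>ww (k,l)\<bar> / Kc * Z) = (\<Sum>k<N. \<Sum>l<N. \<bar>ww (k,l)\<bar>) / Kc * Z" for Z
    by (simp add: sum_distrib_right sum_divide_distrib)
  have bound: "\<bar>\<Sum>i<N. \<Sum>j<N. z i * A i j * z j\<bar> \<le> C * (\<Sum>i<N. \<Sum>j<N. z i * X i j * z j)" for z
  proof -
    have "(\<Sum>i<N. \<Sum>j<N. z i * A i j * z j)
       = (\<Sum>i<N. \<Sum>j<N. \<Sum>k<N. \<Sum>l<N. ww (k,l) / Kc * (z i * z j * (YF i j k l - X i j * X k l)))"
      unfolding Aexp by (simp add: sum_distrib_left sum_distrib_right mult_ac)
    also have "\<dots> = (\<Sum>k<N. \<Sum>l<N. \<Sum>i<N. \<Sum>j<N. ww (k,l) / Kc * (z i * z j * (YF i j k l - X i j * X k l)))"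
      by (rule swap4)
    also have "\<dots> = (\<Sum>k<N. \<Sum>l<N. ww (k,l) / Kc * (\<Sum>i<N. \<Sum>j<N. z i * z j * (YF i j k l - X i j * X k l)))"
      by (simp add: sum_distrib_left)
    finally have e: "(\<Sum>i<N. \<Sum>j<N. z i * A i j * z j) = \<dots>" .
    have "\<bar>\<Sum>k<N. \<Sum>l<N. ww (k,l) / Kc * (\<Sum>i<N. \<Sum>j<N. z i * z j * (YF i j k l - X i j * X k l))\<bar>
       \<le> (\<Sum>k<N. \<Sum>l<N. \<bar>ww (k,l) / Kc * (\<Sum>i<N. \<Sum>j<N. z i * z j * (YF i j k l - X i j * X k l))\<bar>)"
      by (rule order_trans[OF sum_abs sum_mono]) (rule sum_abs)
    also have "\<dots> \<le> (\<Sum>k<N. \<Sum>l<N. \<bar>ww (k,l)\<bar> / Kc * (C0 * (\<Sum>i<N. \<Sum>j<N. z i * X i j * z j)))"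
    proof (intro sum_mono)
      fix k l assume "k \<in> {..<N}" "l \<in> {..<N}"
      then have "\<bar>\<Sum>i<N. \<Sum>j<N. z i * z j * (YF i j k l - X i j * X k l)\<bar> \<le> C0 * (\<Sum>i<N. \<Sum>j<N. z i * X i j * z j)"
        by (intro Gbound) auto
      moreover have "0 \<le> \<bar>ww (k,l)\<bar> / Kc" using Kc_pos by simp
      ultimately have mm: "\<bar>ww (k,l)\<bar> / Kc * \<bar>\<Sum>i<N. \<Sum>j<N. z i * z j * (YF i j k l - X i j * X k l)\<bar>
          \<le> \<bar>ww (k,l)\<bar> / Kc * (C0 * (\<Sum>i<N. \<Sum>j<N. z i * X i j * z j))" by (rule mult_left_mono)
      have "\<bar>ww (k,l) / Kc * (\<Sum>i<N. \<Sum>j<N. z i * z j * (YF i j k l - X i j * X k l))\<bar>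
          = \<bar>ww (k,l)\<bar> / Kc * \<bar>\<Sum>i<N. \<Sum>j<N. z i * z j * (YF i j k l - X i j * X k l)\<bar>"
        using Kc_pos by (simp only: abs_mult abs_divide)
      then show "\<bar>ww (k,l) / Kc * (\<Sum>i<N. \<Sum>j<N. z i * z j * (YF i j k l - X i j * X k l))\<bar>
          \<le> \<bar>ww (k,l)\<bar> / Kc * (C0 * (\<Sum>i<N. \<Sum>j<N. z i * X i j * z j))"
        using mm by simp
    qed
    also have "\<dots> = (\<Sum>k<N. \<Sum>l<N. \<bar>ww (k,l)\<bar>) / Kc * (C0 * (\<Sum>i<N. \<Sum>j<N. z i * X i j * z j))"
      by (rule aux)
    also have "\<dots> = C * (\<Sum>i<N. \<Sum>j<N. z i * X i j * z j)"
      unfolding C_def by (simp only: mult.assoc)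
    finally show ?thesis using e by simp
  qed
  define \<epsilon> where "\<epsilon> = 1 / (C + 1)"
  have eps: "\<epsilon> > 0" unfolding \<epsilon>_def using C0' by simp
  have E2t: "E2 N (\<lambda>i j. X i j + t * A i j) \<and> E2 N (\<lambda>i j. X i j - t * A i j)" if t: "0 < t" "t < \<epsilon>" for t
  proof -
    have tC: "t * C \<le> 1"
    proof -
      have "t * C \<le> \<epsilon> * C" using t C0' by (intro mult_right_mono) auto
      also have "\<dots> \<le> 1" unfolding \<epsilon>_def using C0' by (simp add: field_simps)
      finally show ?thesis .
    qed
    have qf: "0 \<le> (\<Sum>i<N. \<Sum>j<N. z i * (X i j + s * t * A i j) * z j)" if s: "\<bar>s\<bar> = 1" for z s
    proof -
      define ZX where "ZX = (\<Sum>i<N. \<Sum>j<N. z i * X i j * z j)"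
      define ZA where "ZA = (\<Sum>i<N. \<Sum>j<N. z i * A i j * z j)"
      have "(\<Sum>i<N. \<Sum>j<N. z i * (X i j + s * t * A i j) * z j) = ZX + s * t * ZA"
        unfolding ZX_def ZA_def by (simp add: algebra_simps sum.distrib sum_distrib_left)
      moreover have "\<bar>s * t * ZA\<bar> \<le> t * C * ZX"
      proof -
        have "\<bar>s * t * ZA\<bar> = t * \<bar>ZA\<bar>" using s t by (simp add: abs_mult)
        also have "\<dots> \<le> t * (C * ZX)" using bound[of z] t unfolding ZA_def ZX_def by (intro mult_left_mono) auto
        finally show ?thesis by simp
      qed
      moreover have "t * C * ZX \<le> ZX" using tC ZX0[of z] t C0' unfolding ZX_def
        by (intro mult_left_le_one_le) auto
      ultimately show ?thesis by linarith
    qed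
    have "E2 N (\<lambda>i j. X i j + s * t * A i j)" if s: "\<bar>s\<bar> = 1" for s
      unfolding E2_def sym_on_def psd_on_def
      using qf[OF s] Xsym Asym Adiag Xdiag by auto
    from this[of 1] this[of "-1"] show ?thesis by simp
  qed
  have "sym_on N A" unfolding sym_on_def using Asym by auto
  then show ?thesis unfolding pert_E2_def A_def[symmetric] using eps E2t by blast
qed


lemma Q_orth: "orth_proj N (vec_space N (pert_E2 N X)) Qm"
  unfolding orth_proj_def Let_def
proof (intro allI conjI ballI)
  fix ww :: "nat \<times> nat \<Rightarrow> real"
  show "(\<lambda>p. \<Sum>q\<in>pairs N. Qm p q * ww q) \<in> vec_space N (pert_E2 N X)"
    unfolding vec_space_def
  proof (intro CollectI bexI[OF _ Qw_pert[of ww]] ballI)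
    fix p assume "p \<in> pairs N"
    show "(\<Sum>q\<in>pairs N. Qm p q * ww q) = vec (\<lambda>i j. \<Sum>q\<in>pairs N. Qm (i,j) q * ww q) p"
      by (cases p) (simp add: vec_def)
  qed
  fix s assume "s \<in> vec_space N (pert_E2 N X)"
  then obtain A where A: "A \<in> pert_E2 N X" and sA: "\<And>p. p \<in> pairs N \<Longrightarrow> s p = vec A p"
    unfolding vec_space_def by blast
  have Qs: "(\<Sum>p\<in>pairs N. Qm q p * s p) = s q" if q: "q \<in> pairs N" for q
  proof -
    obtain i j where qij: "q = (i,j)" "i < N" "j < N" using q unfolding pairs_def by auto
    have "(\<Sum>p\<in>pairs N. Qm q p * s p) = (\<Sum>k<N. \<Sum>l<N. (YF i j k l - X i j * X k l) / Kc * A k l)"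
      unfolding pairs_sum qij(1) Qm_apply using sA by (simp add: pairs_def vec_def)
    also have "\<dots> = ((\<Sum>k<N. \<Sum>l<N. YF i j k l * A k l) - X i j * (\<Sum>k<N. \<Sum>l<N. X k l * A k l)) / Kc"
      by (simp add: algebra_simps sum_subtractf sum_distrib_left sum_divide_distrib diff_divide_distrib)
    also have "\<dots> = A i j" using QA[OF A qij(2,3)] Kc_pos by simp
    also have "\<dots> = s q" using sA q qij by (simp add: vec_def)
    finally show ?thesis .
  qed
  have "(\<Sum>p\<in>pairs N. (\<Sum>q\<in>pairs N. Qm p q * ww q) * s p) = (\<Sum>q\<in>pairs N. ww q * (\<Sum>p\<in>pairs N. Qm q p * s p))"
  proof -
    have "(\<Sum>p\<in>pairs N. (\<Sum>q\<in>pairs N. Qm p q * ww q) * s p) = (\<Sum>p\<in>pairs N. \<Sum>q\<in>pairs N. ww q * (Qm q p * s p))"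
    proof -
      have "\<And>p q. Qm p q = Qm q p" by (rule Qm_sym)
      then show ?thesis by (simp add: sum_distrib_right) (simp add: sum_distrib_left mult_ac)
    qed
    also have "\<dots> = (\<Sum>q\<in>pairs N. \<Sum>p\<in>pairs N. ww q * (Qm q p * s p))" by (rule sum.swap)
    also have "\<dots> = (\<Sum>q\<in>pairs N. ww q * (\<Sum>p\<in>pairs N. Qm q p * s p))" by (simp add: sum_distrib_left)
    finally show ?thesis .
  qed
  also have "\<dots> = (\<Sum>q\<in>pairs N. ww q * s q)" by (intro sum.cong refl) (simp add: Qs)
  finally show "(\<Sum>p\<in>pairs N. (ww p - (\<Sum>q\<in>pairs N. Qm p q * ww q)) * s p) = 0"
    by (simp add: algebra_simps sum_subtractf)
qed

lemma P_claim:
  assumes P: "orth_proj N (vec_space N (pert_E2 N X)) P" and p: "p \<in> pairs N" and q: "q \<in> pairs N"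
  shows "(\<lambda>(i,j) (k,l). YF i j k l) p q = vec X p * vec X q + Kc * P p q"
proof -
  have "P p q = Qm p q" using orth_unique[OF P Q_orth p q] .
  then show ?thesis using Kc_pos by (cases p; cases q) (simp add: Qm_apply vec_def)
qed

end


theorem theorem4:
  fixes N r :: nat and v :: "nat \<Rightarrow> nat \<Rightarrow> real" and X :: "nat \<Rightarrow> nat \<Rightarrow> real"
  assumes "N \<ge> 1" and "r \<ge> 1"
    and "ETF N r v"
    and "X = Gram r v"
  shows "(E4 N X \<longleftrightarrow> real N < real r * (real r + 1) / 2 \<or> r = 1)
    \<and> (r = 1 \<longrightarrow> (\<exists>x :: nat \<Rightarrow> real. (\<forall>i<N. x i \<in> {-1, 1}) \<and>
          (\<forall>i<N. \<forall>j<N. X i j = x i * x j) \<and>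
          pseudomoment4 N (\<lambda>(i,j) (k,l). x i * x j * x k * x l) \<and>
          extends4 N (\<lambda>(i,j) (k,l). x i * x j * x k * x l) X))
    \<and> (r > 1 \<and> real N < real r * (real r + 1) / 2 \<longrightarrow>
        (let c = real r * (real r + 1) / 2 - real N;
             Y = (\<lambda>(i,j) (k,l).
                   (real r * (real r - 1) / 2) / c * (X i j * X k l + X i k * X j l + X i l * X j k)
                   - (real r ^ 2 * (1 - 1 / real N)) / c *
                       (\<Sum>m<N. X i m * X j m * X k m * X l m))
         in pseudomoment4 N Y \<and> extends4 N Y X \<and>
            (\<forall>P. orth_proj N (vec_space N (pert_E2 N X)) P \<longrightarrow>
               (\<forall>p\<in>pairs N. \<forall>q\<in>pairs N.
                  Y p q = vec X p * vec X q
                          + (real N ^ 2 * (1 - 1 / real r)) / c * P p q))))"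
proof -
  from assms(3) obtain \<alpha> where untf: "UNTF N r v" and al: "\<alpha> \<in> {0..1}"
    and ang: "\<And>i j. i<N \<Longrightarrow> j<N \<Longrightarrow> i \<noteq> j \<Longrightarrow> \<bar>inner_v r v i j\<bar> = \<alpha>"
    unfolding ETF_def by blast
  have Xd: "\<And>i j. X i j = (\<Sum>k<r. v i k * v j k)" using assms(4) unfolding Gram_def inner_v_def by simp
  interpret E: etf N r v "\<alpha>^2" X
  proof
    show "N \<ge> 1" "r \<ge> 1" using assms by auto
    show "\<And>i. i<N \<Longrightarrow> (\<Sum>k<r. (v i k)^2) = 1" using untf unfolding UNTF_def by auto
    show "\<And>k l. k<r \<Longrightarrow> l<r \<Longrightarrow> (\<Sum>i<N. v i k * v i l) = (if k=l then real N / real r else 0)"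
      using untf unfolding UNTF_def by auto
    show "0 \<le> \<alpha>^2" by simp
    show "\<alpha>^2 \<le> 1" using al by (simp add: power_le_one)
    show "\<And>i j. i<N \<Longrightarrow> j<N \<Longrightarrow> i\<noteq>j \<Longrightarrow> (X i j)^2 = \<alpha>^2"
    proof -
      fix i j assume "i<N" "j<N" "i\<noteq>j"
      then have "\<bar>X i j\<bar> = \<alpha>" using ang assms(4) unfolding Gram_def by simp
      then show "(X i j)^2 = \<alpha>^2" by (metis power2_abs)
    qed
    show "\<And>i j. X i j = (\<Sum>k<r. v i k * v j k)" by (rule Xd)
  qed
  have symX: "sym_on N X" unfolding sym_on_def using E.Xsym by auto
  have part3: "r > 1 \<and> real N < real r * (real r + 1) / 2 \<longrightarrow>
        (let c = real r * (real r + 1) / 2 - real N;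
             Y = (\<lambda>(i,j) (k,l).
                   (real r * (real r - 1) / 2) / c * (X i j * X k l + X i k * X j l + X i l * X j k)
                   - (real r ^ 2 * (1 - 1 / real N)) / c *
                       (\<Sum>m<N. X i m * X j m * X k m * X l m))
         in pseudomoment4 N Y \<and> extends4 N Y X \<and>
            (\<forall>P. orth_proj N (vec_space N (pert_E2 N X)) P \<longrightarrow>
               (\<forall>p\<in>pairs N. \<forall>q\<in>pairs N.
                  Y p q = vec X p * vec X q
                          + (real N ^ 2 * (1 - 1 / real r)) / c * P p q)))"
  proof
    assume h: "r > 1 \<and> real N < real r * (real r + 1) / 2"
    define c where "c = real r * (real r + 1) / 2 - real N"
    interpret E2: etf2 N r v "\<alpha>^2" X c
      by unfold_locales (use h c_def in auto)
    have Yeq: "(\<lambda>(i,j) (k,l).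
                   (real r * (real r - 1) / 2) / c * (X i j * X k l + X i k * X j l + X i l * X j k)
                   - (real r ^ 2 * (1 - 1 / real N)) / c *
                       (\<Sum>m<N. X i m * X j m * X k m * X l m)) = (\<lambda>(i,j) (k,l). E2.YF i j k l)"
      unfolding E2.YF_def E2.Aco_def E2.Bco_def ..
    have Keq: "(real N ^ 2 * (1 - 1 / real r)) / c = E2.Kc" unfolding E2.Kc_def ..
    show "let c = real r * (real r + 1) / 2 - real N;
             Y = (\<lambda>(i,j) (k,l).
                   (real r * (real r - 1) / 2) / c * (X i j * X k l + X i k * X j l + X i l * X j k)
                   - (real r ^ 2 * (1 - 1 / real N)) / c *
                       (\<Sum>m<N. X i m * X j m * X k m * X l m))
         in pseudomoment4 N Y \<and> extends4 N Y X \<and>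
            (\<forall>P. orth_proj N (vec_space N (pert_E2 N X)) P \<longrightarrow>
               (\<forall>p\<in>pairs N. \<forall>q\<in>pairs N.
                  Y p q = vec X p * vec X q
                          + (real N ^ 2 * (1 - 1 / real r)) / c * P p q))"
      unfolding Let_def c_def[symmetric] Yeq Keq
      using E2.YF_pm E2.YF_ext E2.P_claim by blast
  qed
  have part2: "r = 1 \<longrightarrow> (\<exists>x :: nat \<Rightarrow> real. (\<forall>i<N. x i \<in> {-1, 1}) \<and>
          (\<forall>i<N. \<forall>j<N. X i j = x i * x j) \<and>
          pseudomoment4 N (\<lambda>(i,j) (k,l). x i * x j * x k * x l) \<and>
          extends4 N (\<lambda>(i,j) (k,l). x i * x j * x k * x l) X)"
    using E.r1_case by blast
  have part1: "E4 N X \<longleftrightarrow> real N < real r * (real r + 1) / 2 \<or> r = 1"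
  proof
    assume e4: "E4 N X"
    show "real N < real r * (real r + 1) / 2 \<or> r = 1"
    proof (cases "r = 1")
      case False
      then have r2: "r \<ge> 2" using assms(2) by simp
      from e4 obtain Y where "pseudomoment4 N Y" "extends4 N Y X" unfolding E4_def by blast
      then have "real N \<noteq> real r * (real r + 1) / 2" using E.only_if[OF r2] by blast
      moreover have "real N \<le> real r * (real r + 1) / 2" using E.gerzon(1)[OF r2] .
      ultimately show ?thesis by simp
    qed simp
  next
    assume h: "real N < real r * (real r + 1) / 2 \<or> r = 1"
    show "E4 N X"
    proof (cases "r = 1")
      case True
      then show ?thesis using part2 symX unfolding E4_def by blast
    next
      case False
      then have "r > 1" using assms(2) by simp
      then have "let c = real r * (real r + 1) / 2 - real N;
             Y = (\<lambda>(i,j) (k,l).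
                   (real r * (real r - 1) / 2) / c * (X i j * X k l + X i k * X j l + X i l * X j k)
                   - (real r ^ 2 * (1 - 1 / real N)) / c *
                       (\<Sum>m<N. X i m * X j m * X k m * X l m))
         in pseudomoment4 N Y \<and> extends4 N Y X \<and>
            (\<forall>P. orth_proj N (vec_space N (pert_E2 N X)) P \<longrightarrow>
               (\<forall>p\<in>pairs N. \<forall>q\<in>pairs N.
                  Y p q = vec X p * vec X q
                          + (real N ^ 2 * (1 - 1 / real r)) / c * P p q))"
        using part3 h False by blast
      then show ?thesis using symX unfolding E4_def Let_def by blast
    qed
  qed
  show ?thesis using part1 part2 part3 by blast
qed


end
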